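(* For all $k,\Delta,\delta,n$: (a) $n^*_H(k,\Delta,\delta)\le n^*_M(k,\Delta,\delta)$; (b) if $n^*_H(k,\Delta,\delta)\le n$ then $n^*_M\big(k',2\Delta,\delta+\binom{k'}{\Delta}(1-\frac{\Delta}{k'})^k\big)\le n$ for every $k'\in\mathbb{N}$; (c) if $n^*_P(k,\Delta,\delta)\le n$ then $n^*_M(k,\Delta,\delta+(e/4)^n)\le2n$; (d) if $n^*_M(k,\Delta,\delta)\le n$ then $n^*_P(k,\Delta,\delta+(2/e)^n)\le2n$; (e) if $n^*_B(k,\Delta,\delta)\le n$ then $n^*_H(k,\Delta,\delta+(e/4)^n)\le2n$; (f) if $n^*_H(k,\Delta,\delta)\le n$ then $n^*_B(k,\Delta,\delta+(2/e)^n)\le2n$.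
   Context: Consider an urn of $k$ colored balls with $C$ distinct colors and four sampling models: multinomial (a fixed number of balls drawn uniformly with replacement), hypergeometric (a fixed number drawn uniformly without replacement), Bernoulli (each ball observed independently with a fixed probability $p$, so the sample size is $\mathrm{Binom}(k,p)$), and Poisson (the sample size is $\mathrm{Poi}(\lambda)$ and, given the size, balls are drawn uniformly with replacement). $n^*_M(k,\Delta,\delta)$, $n^*_H(k,\Delta,\delta)$, $n^*_B(k,\Delta,\delta)$, $n^*_P(k,\Delta,\delta)$ denote the minimum expected sample size under the multinomial, hypergeometric, Bernoulli and Poisson model respectively such that there exists an estimator $\hat C$ with $\mathbb{P}[|\hat C-C|\ge\Delta]\le\delta$ for every urn of $k$ balls. *)

theory Defs
  imports "HOL-Probability.Probability"
begin

text \<open>An urn of k balls is a list of colours of length k (colours are natural numbers).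
  An observation is the multiset of colours of the sampled balls.
  Estimators may be randomized: they map an observation to a distribution of reals.\<close>

definition num_colors :: "nat list \<Rightarrow> nat" where
  "num_colors xs = card (set xs)"

primrec multinomial_sample :: "nat list \<Rightarrow> nat \<Rightarrow> nat multiset pmf" where
  "multinomial_sample xs 0 = return_pmf {#}"
| "multinomial_sample xs (Suc m) =
     (if xs = [] then return_pmf {#}
      else bind_pmf (pmf_of_set {..<length xs}) (\<lambda>i.
           bind_pmf (multinomial_sample xs m) (\<lambda>S. return_pmf (add_mset (xs ! i) S))))"

text \<open>Hypergeometric: m balls drawn uniformly without replacement (used only for m \<le> length xs).\<close>
definition hypergeometric_sample :: "nat list \<Rightarrow> nat \<Rightarrow> nat multiset pmf" where
  "hypergeometric_sample xs m =
     map_pmf (\<lambda>S. image_mset (\<lambda>i. xs ! i) (mset_set S))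
       (pmf_of_set {S. S \<subseteq> {..<length xs} \<and> card S = m})"

primrec bernoulli_sample :: "nat list \<Rightarrow> real \<Rightarrow> nat multiset pmf" where
  "bernoulli_sample [] p = return_pmf {#}"
| "bernoulli_sample (x # xs) p =
     bind_pmf (bernoulli_pmf p) (\<lambda>b.
       bind_pmf (bernoulli_sample xs p) (\<lambda>S. return_pmf (if b then add_mset x S else S)))"

text \<open>Poisson(lambda) distribution, with Poi(0) the point mass at 0.\<close>
definition poi :: "real \<Rightarrow> nat pmf" where
  "poi l = (if 0 < l then poisson_pmf l else return_pmf 0)"

definition poisson_sample :: "nat list \<Rightarrow> real \<Rightarrow> nat multiset pmf" where
  "poisson_sample xs l = bind_pmf (poi l) (\<lambda>N. multinomial_sample xs N)"

definition admits_estimator ::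
  "(nat list \<Rightarrow> nat multiset pmf) \<Rightarrow> nat \<Rightarrow> nat \<Rightarrow> real \<Rightarrow> bool" where
  "admits_estimator samp k \<Delta> \<delta> \<longleftrightarrow>
     (\<exists>est :: nat multiset \<Rightarrow> real pmf. \<forall>xs. length xs = k \<longrightarrow>
        measure_pmf.prob (bind_pmf (samp xs) est)
          {c. \<bar>c - real (num_colors xs)\<bar> \<ge> real \<Delta>} \<le> \<delta>)"

text \<open>Minimum expected sample sizes (infimum; \<infinity> if infeasible).\<close>
definition nstar_M :: "nat \<Rightarrow> nat \<Rightarrow> real \<Rightarrow> ereal" where
  "nstar_M k \<Delta> \<delta> =
     (INF m \<in> {m::nat. admits_estimator (\<lambda>xs. multinomial_sample xs m) k \<Delta> \<delta>}. ereal (real m))"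

definition nstar_H :: "nat \<Rightarrow> nat \<Rightarrow> real \<Rightarrow> ereal" where
  "nstar_H k \<Delta> \<delta> =
     (INF m \<in> {m::nat. m \<le> k \<and> admits_estimator (\<lambda>xs. hypergeometric_sample xs m) k \<Delta> \<delta>}.
        ereal (real m))"

definition nstar_B :: "nat \<Rightarrow> nat \<Rightarrow> real \<Rightarrow> ereal" where
  "nstar_B k \<Delta> \<delta> =
     (INF p \<in> {p::real. 0 \<le> p \<and> p \<le> 1 \<and> admits_estimator (\<lambda>xs. bernoulli_sample xs p) k \<Delta> \<delta>}.
        ereal (real k * p))"

definition nstar_P :: "nat \<Rightarrow> nat \<Rightarrow> real \<Rightarrow> ereal" where
  "nstar_P k \<Delta> \<delta> =
     (INF l \<in> {l::real. 0 \<le> l \<and> admits_estimator (\<lambda>xs. poisson_sample xs l) k \<Delta> \<delta>}. ereal l)"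

end

theory Submission
  imports Defs "HOL-Combinatorics.List_Permutation" "HOL-Combinatorics.Multiset_Permutations"
begin

lemma pmf_of_set_fiber:
  assumes "finite A" "A \<noteq> {}" "f ` A = B" "\<And>b. b \<in> B \<Longrightarrow> card {a\<in>A. f a = b} = c"
  shows "map_pmf f (pmf_of_set A) = pmf_of_set B"
proof (rule pmf_eqI)
  fix b
  have fB: "finite B" using assms by auto
  have cA: "card A = c * card B"
  proof -
    have "A = (\<Union>b\<in>B. {a\<in>A. f a = b})" using assms(3) by auto
    hence "card A = (\<Sum>b\<in>B. card {a\<in>A. f a = b})"
      by (subst card_UN_disjoint[symmetric]) (use assms(1) fB in auto)
    also have "\<dots> = (\<Sum>b\<in>B. c)" using assms(4) by simp
    finally show ?thesis by simp
  qed
  have "B \<noteq> {}" using assms by auto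
  have cpos: "c > 0" using cA assms card_gt_0_iff by (metis mult_is_0 neq0_conv)
  have "pmf (map_pmf f (pmf_of_set A)) b = measure (pmf_of_set A) (f -` {b})"
    by (simp add: pmf_map)
  also have "\<dots> = card (A \<inter> f -` {b}) / card A" using assms by (simp add: measure_pmf_of_set)
  also have "A \<inter> f -` {b} = {a\<in>A. f a = b}" by auto
  finally have *: "pmf (map_pmf f (pmf_of_set A)) b = card {a\<in>A. f a = b} / card A" .
  show "pmf (map_pmf f (pmf_of_set A)) b = pmf (pmf_of_set B) b"
  proof (cases "b \<in> B")
    case True
    thus ?thesis using * assms(4)[OF True] cA cpos \<open>B \<noteq> {}\<close> fB by (simp add: indicator_def)
  next
    case False
    hence "{a\<in>A. f a = b} = {}" using assms(3) by auto
    hence "card {a\<in>A. f a = b} = 0" by (simp only: card.empty)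
    thus ?thesis using * False \<open>B \<noteq> {}\<close> fB by (simp add: indicator_def)
  qed
qed

lemma pair_pmf_of_set:
  assumes "finite A" "A \<noteq> {}" "finite B" "B \<noteq> {}"
  shows "pair_pmf (pmf_of_set A) (pmf_of_set B) = pmf_of_set (A \<times> B)"
  by (rule pmf_eqI) (use assms in \<open>auto simp: pmf_pair indicator_def card_cartesian_product pmf_of_set[OF assms(2,1)] pmf_of_set[OF assms(4,3)]\<close>)

definition ilists :: "nat \<Rightarrow> nat \<Rightarrow> nat list set" where
  "ilists k m = {l. set l \<subseteq> {..<k} \<and> length l = m}"
definition dlists :: "nat \<Rightarrow> nat \<Rightarrow> nat list set" where
  "dlists k m = {l. length l = m \<and> distinct l \<and> set l \<subseteq> {..<k}}"

lemma finite_ilists[simp]: "finite (ilists k m)"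
  unfolding ilists_def by (rule finite_lists_length_eq) simp
lemma card_ilists: "card (ilists k m) = k ^ m"
  unfolding ilists_def by (subst card_lists_length_eq) auto
lemma ilists_ne: "k > 0 \<Longrightarrow> ilists k m \<noteq> {}"
proof -
  assume "k > 0"
  hence "replicate m 0 \<in> ilists k m" by (auto simp: ilists_def)
  thus ?thesis by auto
qed

lemma ilists_Suc_bij: "bij_betw (\<lambda>(i,l). i # l) ({..<k} \<times> ilists k m) (ilists k (Suc m))"
  by (rule bij_betwI'[where ?f="\<lambda>(i,l). i # l"]) (auto simp: ilists_def length_Suc_conv)

lemma mult_ilists:
  assumes "xs \<noteq> []"
  shows "multinomial_sample xs m = map_pmf (\<lambda>l. mset (map ((!) xs) l)) (pmf_of_set (ilists (length xs) m))"
proof (induction m)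
  case 0
  have "ilists (length xs) 0 = {[]}" by (auto simp: ilists_def)
  thus ?case by (simp add: pmf_of_set_singleton)
next
  case (Suc m)
  let ?k = "length xs"
  have kp: "?k > 0" using assms by simp
  have "pmf_of_set (ilists ?k (Suc m)) = map_pmf (\<lambda>(i,l). i # l) (pmf_of_set ({..<?k} \<times> ilists ?k m))"
    by (rule map_pmf_of_set_bij_betw[symmetric]) (use ilists_Suc_bij ilists_ne[OF kp] kp in auto)
  also have "pmf_of_set ({..<?k} \<times> ilists ?k m) = pair_pmf (pmf_of_set {..<?k}) (pmf_of_set (ilists ?k m))"
    by (rule pair_pmf_of_set[symmetric]) (use ilists_ne[OF kp] kp in auto)
  finally have U: "pmf_of_set (ilists ?k (Suc m)) = map_pmf (\<lambda>(i,l). i # l) (pair_pmf (pmf_of_set {..<?k}) (pmf_of_set (ilists ?k m)))" .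
  show ?case using assms
    by (simp add: U Suc.IH pair_pmf_def map_bind_pmf bind_map_pmf map_pmf_def[symmetric] pmf.map_comp o_def)
qed

lemma finite_dlists[simp]: "finite (dlists k m)"
  by (rule finite_subset[OF _ finite_ilists[of k m]]) (auto simp: dlists_def ilists_def)
lemma dlists_ne: "m \<le> k \<Longrightarrow> dlists k m \<noteq> {}"
proof -
  assume "m \<le> k"
  hence "[0..<m] \<in> dlists k m" by (auto simp: dlists_def)
  thus ?thesis by auto
qed

lemma hyp_dlists:
  assumes "m \<le> length xs"
  shows "hypergeometric_sample xs m = map_pmf (\<lambda>l. mset (map ((!) xs) l)) (pmf_of_set (dlists (length xs) m))"
proof -
  let ?k = "length xs"
  let ?Sub = "{S. S \<subseteq> {..<?k} \<and> card S = m}"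
  have "map_pmf set (pmf_of_set (dlists ?k m)) = pmf_of_set ?Sub"
  proof (rule pmf_of_set_fiber[where c="fact m"])
    show "set ` dlists ?k m = ?Sub"
    proof
      show "set ` dlists ?k m \<subseteq> ?Sub" by (auto simp: dlists_def distinct_card)
      show "?Sub \<subseteq> set ` dlists ?k m"
      proof
        fix S assume S: "S \<in> ?Sub"
        hence "finite S" using finite_subset by blast
        hence "S = set (sorted_list_of_set S)" "sorted_list_of_set S \<in> dlists ?k m"
          using S by (auto simp: dlists_def)
        thus "S \<in> set ` dlists ?k m" by blast
      qed
    qed
    fix S assume S: "S \<in> ?Sub"
    hence "finite S" using finite_subset by blast
    have "{a \<in> dlists ?k m. set a = S} = permutations_of_set S"
      using S by (auto simp: dlists_def permutations_of_set_def distinct_card)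
    thus "card {a \<in> dlists ?k m. set a = S} = fact m" using S \<open>finite S\<close> by simp
  qed (use dlists_ne[OF assms] in auto)
  hence "hypergeometric_sample xs m = map_pmf (\<lambda>S. image_mset ((!) xs) (mset_set S)) (map_pmf set (pmf_of_set (dlists ?k m)))"
    unfolding hypergeometric_sample_def by simp
  also have "\<dots> = map_pmf (\<lambda>l. mset (map ((!) xs) l)) (pmf_of_set (dlists ?k m))"
    unfolding pmf.map_comp o_def
    by (rule map_pmf_cong) (use dlists_ne[OF assms] in \<open>auto simp: mset_set_set mset_map dlists_def[symmetric]\<close>,
        auto simp: dlists_def mset_set_set)
  finally show ?thesis .
qed

definition Perm :: "nat \<Rightarrow> (nat \<Rightarrow> nat) pmf" where
  "Perm N = pmf_of_set {p. p permutes {..<N}}"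

definition shuffle :: "(nat list \<Rightarrow> 'b pmf) \<Rightarrow> nat multiset \<Rightarrow> 'b pmf" where
  "shuffle G M = bind_pmf (Perm (size M)) (\<lambda>p. G (permute_list p (sorted_list_of_multiset M)))"

lemma perms_ne: "{p. p permutes {..<(N::nat)}} \<noteq> {}"
  using permutes_id by blast
lemma perms_fin: "finite {p. p permutes {..<(N::nat)}}"
  using finite_permutations[of "{..<N}"] by simp

lemma permute_list_inv_cancel:
  assumes "p permutes {..<length l}"
  shows "permute_list (inv p) (permute_list p l) = l"
    "permute_list p (permute_list (inv p) l) = l"
proof -
  have "permute_list (inv p) (permute_list p l) = permute_list (p \<circ> inv p) l"
    by (rule permute_list_compose[symmetric]) (use permutes_inv[OF assms] in simp)
  thus "permute_list (inv p) (permute_list p l) = l" by (simp add: permutes_inv_o[OF assms])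
  have "permute_list p (permute_list (inv p) l) = permute_list (inv p \<circ> p) l"
    by (rule permute_list_compose[symmetric]) (use assms in simp)
  thus "permute_list p (permute_list (inv p) l) = l" by (simp add: permutes_inv_o[OF assms])
qed

lemma Perm_compose:
  assumes "t permutes {..<N}"
  shows "map_pmf (\<lambda>p. t \<circ> p) (Perm N) = Perm N"
  unfolding Perm_def
proof (rule map_pmf_of_set_bij_betw[OF _ perms_ne perms_fin])
  show "bij_betw ((\<circ>) t) {p. p permutes {..<N}} {p. p permutes {..<N}}"
  proof (rule bij_betwI[where g="\<lambda>p. inv t \<circ> p"])
    show "(\<circ>) t \<in> {p. p permutes {..<N}} \<rightarrow> {p. p permutes {..<N}}"
      using assms by (auto intro: permutes_compose)
    show "(\<lambda>p. inv t \<circ> p) \<in> {p. p permutes {..<N}} \<rightarrow> {p. p permutes {..<N}}"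
      using permutes_inv[OF assms] by (auto intro: permutes_compose)
    show "inv t \<circ> (t \<circ> x) = x" for x
      by (simp add: comp_assoc[symmetric] permutes_inv_o[OF assms])
    show "t \<circ> (inv t \<circ> y) = y" for y
      by (simp add: comp_assoc[symmetric] permutes_inv_o[OF assms])
  qed
qed

lemma shuffle_mset:
  assumes "length c = N"
  shows "shuffle G (mset c) = bind_pmf (Perm N) (\<lambda>p. G (permute_list p c))"
proof -
  let ?s = "sorted_list_of_multiset (mset c)"
  have "mset ?s = mset c" by simp
  then obtain t where t: "t permutes {..<length c}" "permute_list t c = ?s"
    using mset_eq_permutation by metis
  have "shuffle G (mset c) = bind_pmf (Perm N) (\<lambda>p. G (permute_list p (permute_list t c)))"
    unfolding shuffle_def using assms t by simp
  also have "\<dots> = bind_pmf (Perm N) (\<lambda>p. G (permute_list (t \<circ> p) c))"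
    unfolding Perm_def
    by (rule bind_pmf_cong[OF refl]) (use assms in \<open>auto simp: set_pmf_of_set[OF perms_ne perms_fin] permute_list_compose\<close>)
  also have "\<dots> = bind_pmf (map_pmf (\<lambda>p. t \<circ> p) (Perm N)) (\<lambda>p. G (permute_list p c))"
    by (simp add: bind_map_pmf)
  also have "\<dots> = bind_pmf (Perm N) (\<lambda>p. G (permute_list p c))"
    using Perm_compose t(1) assms by simp
  finally show ?thesis .
qed

lemma shuffle_lemma:
  assumes fin: "finite A" and ne: "A \<noteq> {}" and len: "\<And>l. l \<in> A \<Longrightarrow> length l = N"
    and closed: "\<And>l p. l \<in> A \<Longrightarrow> p permutes {..<N} \<Longrightarrow> permute_list p l \<in> A"
  shows "bind_pmf (map_pmf (\<lambda>l. mset (map ((!) xs) l)) (pmf_of_set A)) (shuffle G)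
       = bind_pmf (pmf_of_set A) (\<lambda>l. G (map ((!) xs) l))"
proof -
  have "bind_pmf (map_pmf (\<lambda>l. mset (map ((!) xs) l)) (pmf_of_set A)) (shuffle G)
      = bind_pmf (pmf_of_set A) (\<lambda>l. bind_pmf (Perm N) (\<lambda>p. G (permute_list p (map ((!) xs) l))))"
    unfolding bind_map_pmf
  proof (rule bind_pmf_cong[OF refl])
    fix l assume "l \<in> set_pmf (pmf_of_set A)"
    hence "l \<in> A" using fin ne by simp
    thus "shuffle G (mset (map ((!) xs) l)) = bind_pmf (Perm N) (\<lambda>p. G (permute_list p (map ((!) xs) l)))"
      by (intro shuffle_mset) (simp add: len)
  qed
  also have "\<dots> = bind_pmf (pmf_of_set A) (\<lambda>l. bind_pmf (Perm N) (\<lambda>p. G (map ((!) xs) (permute_list p l))))"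
    unfolding Perm_def
    by (rule bind_pmf_cong[OF refl], rule bind_pmf_cong[OF refl])
       (use fin ne len in \<open>auto simp: set_pmf_of_set[OF perms_ne perms_fin] permute_list_map\<close>)
  also have "\<dots> = bind_pmf (Perm N) (\<lambda>p. bind_pmf (pmf_of_set A) (\<lambda>l. G (map ((!) xs) (permute_list p l))))"
    by (rule bind_commute_pmf)
  also have "\<dots> = bind_pmf (Perm N) (\<lambda>p. bind_pmf (pmf_of_set A) (\<lambda>l. G (map ((!) xs) l)))"
  proof (rule bind_pmf_cong[OF refl])
    fix p assume "p \<in> set_pmf (Perm N)"
    hence p: "p permutes {..<N}" unfolding Perm_def set_pmf_of_set[OF perms_ne perms_fin] by simp
    have "map_pmf (permute_list p) (pmf_of_set A) = pmf_of_set A"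
    proof (rule map_pmf_of_set_bij_betw[OF _ ne fin])
      show "bij_betw (permute_list p) A A"
      proof (rule bij_betwI[where g="permute_list (inv p)"])
        show "permute_list p \<in> A \<rightarrow> A" using closed p by auto
        show "permute_list (inv p) \<in> A \<rightarrow> A" using closed permutes_inv[OF p] by auto
        show "permute_list (inv p) (permute_list p x) = x" if "x \<in> A" for x
          using permute_list_inv_cancel(1)[of p x] p len[OF that] by simp
        show "permute_list p (permute_list (inv p) y) = y" if "y \<in> A" for y
          using permute_list_inv_cancel(2)[of p y] p len[OF that] by simp
      qed
    qed
    have "bind_pmf (pmf_of_set A) (\<lambda>l. G (map ((!) xs) (permute_list p l)))
       = bind_pmf (map_pmf (permute_list p) (pmf_of_set A)) (\<lambda>l. G (map ((!) xs) l))"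
      by (simp only: bind_map_pmf)
    thus "bind_pmf (pmf_of_set A) (\<lambda>l. G (map ((!) xs) (permute_list p l))) = bind_pmf (pmf_of_set A) (\<lambda>l. G (map ((!) xs) l))"
      using \<open>map_pmf (permute_list p) (pmf_of_set A) = pmf_of_set A\<close> by simp
  qed
  also have "\<dots> = bind_pmf (pmf_of_set A) (\<lambda>l. G (map ((!) xs) l))"
    by simp
  finally show ?thesis .
qed

lemma card_take_fiber:
  assumes "length q = m" "\<And>l. P l \<Longrightarrow> m \<le> length l"
  shows "card {l. P l \<and> take m l = q} = card {r. P (q @ r)}"
proof -
  have "bij_betw (\<lambda>r. q @ r) {r. P (q @ r)} {l. P l \<and> take m l = q}"
  proof (rule bij_betwI[where g="drop m"])
    show "(@) q \<in> {r. P (q @ r)} \<rightarrow> {l. P l \<and> take m l = q}" using assms(1) by auto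
    show "drop m \<in> {l. P l \<and> take m l = q} \<rightarrow> {r. P (q @ r)}"
      by (intro Pi_I) (metis (mono_tags, lifting) append_take_drop_id mem_Collect_eq)
    show "drop m (q @ x) = x" for x using assms(1) by simp
    show "q @ drop m y = y" if "y \<in> {l. P l \<and> take m l = q}" for y
      using that by (metis (mono_tags, lifting) append_take_drop_id mem_Collect_eq)
  qed
  thus ?thesis by (simp add: bij_betw_same_card)
qed

lemma ilists_take:
  assumes "m \<le> N" "k > 0"
  shows "map_pmf (take m) (pmf_of_set (ilists k N)) = pmf_of_set (ilists k m)"
proof (rule pmf_of_set_fiber[where c="k ^ (N - m)"])
  show "take m ` ilists k N = ilists k m"
  proof
    show "take m ` ilists k N \<subseteq> ilists k m" using assms
      by (auto simp: ilists_def dest: in_set_takeD)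
    show "ilists k m \<subseteq> take m ` ilists k N"
    proof
      fix q assume q: "q \<in> ilists k m"
      have "q @ replicate (N - m) 0 \<in> ilists k N" using q assms by (auto simp: ilists_def)
      moreover have "take m (q @ replicate (N - m) 0) = q" using q by (simp add: ilists_def)
      ultimately show "q \<in> take m ` ilists k N" by force
    qed
  qed
  fix q assume q: "q \<in> ilists k m"
  have "card {l. l \<in> ilists k N \<and> take m l = q} = card {r. q @ r \<in> ilists k N}"
    by (rule card_take_fiber) (use q assms in \<open>auto simp: ilists_def\<close>)
  also have "{r. q @ r \<in> ilists k N} = ilists k (N - m)" using q assms by (auto simp: ilists_def)
  finally show "card {a \<in> ilists k N. take m a = q} = k ^ (N - m)" by (simp add: card_ilists)
qed (use ilists_ne[OF assms(2)] in auto)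

lemma dlists_take:
  assumes "m \<le> N" "N \<le> k"
  shows "map_pmf (take m) (pmf_of_set (dlists k N)) = pmf_of_set (dlists k m)"
proof (rule pmf_of_set_fiber[where c="\<Prod>{(k - m) - (N - m) + 1 .. k - m}"])
  show "take m ` dlists k N = dlists k m"
  proof
    show "take m ` dlists k N \<subseteq> dlists k m" using assms
      by (auto simp: dlists_def dest: in_set_takeD)
    show "dlists k m \<subseteq> take m ` dlists k N"
    proof
      fix q assume q: "q \<in> dlists k m"
      have "card ({..<k} - set q) = k - m" using q by (simp add: dlists_def card_Diff_subset distinct_card)
      define r where "r = take (N - m) (sorted_list_of_set ({..<k} - set q))"
      have r: "length r = N - m" "distinct r" "set r \<subseteq> {..<k} - set q"
        unfolding r_def using \<open>card ({..<k} - set q) = k - m\<close> assms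
        by (auto dest: in_set_takeD)
      have "q @ r \<in> dlists k N" using q r assms by (auto simp: dlists_def)
      moreover have "take m (q @ r) = q" using q by (simp add: dlists_def)
      ultimately show "q \<in> take m ` dlists k N" by force
    qed
  qed
  fix q assume q: "q \<in> dlists k m"
  have cq: "card ({..<k} - set q) = k - m" using q by (simp add: dlists_def card_Diff_subset distinct_card)
  have "card {l. l \<in> dlists k N \<and> take m l = q} = card {r. q @ r \<in> dlists k N}"
    by (rule card_take_fiber) (use q assms in \<open>auto simp: dlists_def\<close>)
  also have "{r. q @ r \<in> dlists k N} = {r. length r = N - m \<and> distinct r \<and> set r \<subseteq> {..<k} - set q}"
    using q assms by (auto simp: dlists_def)
  also have "card \<dots> = \<Prod>{(k - m) - (N - m) + 1 .. k - m}"
    using card_lists_distinct_length_eq[of "{..<k} - set q" "N - m"] cq assms by simp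
  finally show "card {a \<in> dlists k N. take m a = q} = \<Prod>{(k - m) - (N - m) + 1 .. k - m}" by simp
qed (use dlists_ne assms in auto)

definition dropk :: "nat \<Rightarrow> nat multiset \<Rightarrow> nat multiset pmf" where
  "dropk m = shuffle (\<lambda>c. return_pmf (mset (take m c)))"

lemma permute_list_set:
  assumes "p permutes {..<length l}" shows "set (permute_list p l) = set l"
  using mset_permute_list[OF assms] by (metis set_mset_mset)

lemma mult_drop:
  assumes "xs \<noteq> []" "m \<le> N"
  shows "bind_pmf (multinomial_sample xs N) (dropk m) = multinomial_sample xs m"
proof -
  let ?k = "length xs"
  have kp: "?k > 0" using assms by simp
  have "bind_pmf (multinomial_sample xs N) (dropk m)
      = bind_pmf (pmf_of_set (ilists ?k N)) (\<lambda>l. return_pmf (mset (take m (map ((!) xs) l))))"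
    unfolding mult_ilists[OF assms(1)] dropk_def
    by (rule shuffle_lemma) (use ilists_ne[OF kp] finite_ilists[of ?k N] in \<open>auto simp: ilists_def permute_list_set\<close>)
  also have "\<dots> = map_pmf (\<lambda>l. mset (map ((!) xs) l)) (map_pmf (take m) (pmf_of_set (ilists ?k N)))"
    by (simp add: map_pmf_def bind_assoc_pmf bind_return_pmf take_map)
  also have "\<dots> = multinomial_sample xs m"
    by (simp add: ilists_take assms kp mult_ilists[OF assms(1)])
  finally show ?thesis .
qed

lemma hyp_drop:
  assumes "m \<le> N" "N \<le> length xs"
  shows "bind_pmf (hypergeometric_sample xs N) (dropk m) = hypergeometric_sample xs m"
proof -
  let ?k = "length xs"
  have "bind_pmf (hypergeometric_sample xs N) (dropk m)
      = bind_pmf (pmf_of_set (dlists ?k N)) (\<lambda>l. return_pmf (mset (take m (map ((!) xs) l))))"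
    unfolding hyp_dlists[OF assms(2)] dropk_def
    by (rule shuffle_lemma) (use dlists_ne[OF assms(2)] finite_dlists[of ?k N] in \<open>auto simp: dlists_def permute_list_set\<close>)
  also have "\<dots> = map_pmf (\<lambda>l. mset (map ((!) xs) l)) (map_pmf (take m) (pmf_of_set (dlists ?k N)))"
    by (simp add: map_pmf_def bind_assoc_pmf bind_return_pmf take_map)
  also have "\<dots> = hypergeometric_sample xs m"
    using assms by (simp add: dlists_take hyp_dlists)
  finally show ?thesis .
qed

primrec idx :: "'a list \<Rightarrow> 'a \<Rightarrow> nat" where
  "idx [] x = 0"
| "idx (y # ys) x = (if x = y then 0 else Suc (idx ys x))"

lemma idx_lt: "x \<in> set r \<Longrightarrow> idx r x < length r"
  by (induction r) auto
lemma nth_idx: "x \<in> set r \<Longrightarrow> r ! idx r x = x"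
  by (induction r) auto
lemma idx_nth: "distinct r \<Longrightarrow> i < length r \<Longrightarrow> idx r (r ! i) = i"
  by (induction r arbitrary: i) (auto simp: nth_Cons split: nat.splits)
lemma idx_map: "inj_on f (set r) \<Longrightarrow> x \<in> set r \<Longrightarrow> idx (map f r) (f x) = idx r x"
  by (induction r) (auto simp: inj_on_def)
lemma map_idx_self: "distinct r \<Longrightarrow> map (idx r) r = [0..<length r]"
  by (rule nth_equalityI) (auto simp: idx_nth)

definition pat :: "'a list \<Rightarrow> nat list" where
  "pat l = map (idx (remdups l)) l"

lemma pat_length[simp]: "length (pat l) = length l"
  by (simp add: pat_def)

lemma pat_recover: "map ((!) (remdups l)) (pat l) = l"
  by (rule nth_equalityI) (auto simp: pat_def nth_idx)

lemma remdups_map_inj: "inj_on f (set l) \<Longrightarrow> remdups (map f l) = map f (remdups l)"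
  by (induction l) (auto simp: inj_on_def)

lemma pat_map_inj: "inj_on f (set l) \<Longrightarrow> pat (map f l) = pat l"
  unfolding pat_def by (simp add: remdups_map_inj idx_map)

lemma set_pat: "set (pat l) \<subseteq> {..<length (remdups l)}"
  by (auto simp: pat_def intro!: idx_lt)

lemma inj_idx: "inj_on (idx r) (set r)"
  by (rule inj_onI) (metis nth_idx)

lemma pat_pat: "pat (pat l) = pat l"
proof -
  have "pat (map (idx (remdups l)) l) = pat l"
    by (rule pat_map_inj) (rule inj_on_subset[OF inj_idx], simp)
  thus ?thesis by (simp only: pat_def[of l])
qed

lemma remdups_pat: "remdups (pat l) = [0..<length (remdups l)]"
proof -
  have "remdups (pat l) = map (idx (remdups l)) (remdups l)"
    unfolding pat_def by (rule remdups_map_inj) (rule inj_on_subset[OF inj_idx], simp)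
  thus ?thesis by (simp add: map_idx_self)
qed

lemma length_remdups_pat: "length (remdups (pat l)) = length (remdups l)"
  by (simp add: remdups_pat)

definition Fp :: "nat list \<times> nat list \<Rightarrow> nat list" where
  "Fp = (\<lambda>(j, D). map ((!) D) (pat j))"

lemma Fp_char:
  assumes "length j = m" "length D = m" "distinct D"
  shows "Fp (j, D) = l \<longleftrightarrow> pat j = pat l \<and> take (length (remdups l)) D = remdups l"
proof
  assume *: "Fp (j, D) = l"
  have dj: "length (remdups j) \<le> m" using assms(1) length_remdups_leq by metis
  have inj: "inj_on ((!) D) (set (pat j))"
    by (rule inj_on_subset[of _ "{..<m}"]) (use assms(2,3) set_pat[of j] dj in \<open>auto simp: inj_on_def nth_eq_iff_index_eq\<close>)
  have l: "l = map ((!) D) (pat j)" using * by (simp add: Fp_def)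
  have "pat l = pat (pat j)" unfolding l by (rule pat_map_inj[OF inj])
  hence p: "pat j = pat l" by (simp add: pat_pat)
  have "remdups l = map ((!) D) (remdups (pat j))" unfolding l by (rule remdups_map_inj[OF inj])
  also have "\<dots> = take (length (remdups j)) D"
    using dj assms(2) by (simp add: remdups_pat take_map[symmetric] map_nth[symmetric]) (metis map_nth take_map take_upt min_absorb1 add_0 length_map)
  finally have r: "remdups l = take (length (remdups j)) D" .
  hence "length (remdups l) = length (remdups j)" using dj assms(2) by simp
  thus "pat j = pat l \<and> take (length (remdups l)) D = remdups l" using p r by simp
next
  assume "pat j = pat l \<and> take (length (remdups l)) D = remdups l"
  hence p: "pat j = pat l" and t: "take (length (remdups l)) D = remdups l" by auto
  have "Fp (j, D) = map ((!) D) (pat l)" by (simp add: Fp_def p)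
  also have "\<dots> = map ((!) (take (length (remdups l)) D)) (pat l)"
    using set_pat[of l] by (intro map_cong refl) (auto simp: nth_take)
  also have "\<dots> = l" by (simp add: t pat_recover)
  finally show "Fp (j, D) = l" .
qed

lemma remdups_map_nth_pat:
  assumes "length q = length (remdups l)" "distinct q"
  shows "remdups (map ((!) q) (pat l)) = q" "pat (map ((!) q) (pat l)) = pat l"
proof -
  have inj: "inj_on ((!) q) (set (pat l))"
    by (rule inj_on_subset[of _ "{..<length q}"]) (use assms set_pat[of l] in \<open>auto simp: inj_on_def nth_eq_iff_index_eq\<close>)
  show "remdups (map ((!) q) (pat l)) = q"
    using assms by (simp add: remdups_map_inj[OF inj] remdups_pat assms(1)[symmetric] map_nth)
  show "pat (map ((!) q) (pat l)) = pat l"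
    by (simp add: pat_map_inj[OF inj] pat_pat)
qed

lemma cardA:
  assumes "l \<in> ilists k m"
  shows "card {j \<in> ilists k m. pat j = pat l} = card (dlists k (length (remdups l)))"
proof -
  let ?d = "length (remdups l)"
  have "bij_betw (\<lambda>q. map ((!) q) (pat l)) (dlists k ?d) {j \<in> ilists k m. pat j = pat l}"
  proof (rule bij_betwI[where g=remdups])
    show "(\<lambda>q. map ((!) q) (pat l)) \<in> dlists k ?d \<rightarrow> {j \<in> ilists k m. pat j = pat l}"
    proof
      fix q assume q: "q \<in> dlists k ?d"
      have "set (map ((!) q) (pat l)) \<subseteq> {..<k}"
        using q set_pat[of l] by (auto simp: dlists_def) (metis lessThan_iff nth_mem subsetD)
      thus "map ((!) q) (pat l) \<in> {j \<in> ilists k m. pat j = pat l}"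
        using q assms remdups_map_nth_pat[of q l] by (auto simp: dlists_def ilists_def)
    qed
    show "remdups \<in> {j \<in> ilists k m. pat j = pat l} \<rightarrow> dlists k ?d"
    proof
      fix j assume j: "j \<in> {j \<in> ilists k m. pat j = pat l}"
      have "length (remdups j) = ?d"
        by (metis (mono_tags, lifting) j length_remdups_pat mem_Collect_eq)
      thus "remdups j \<in> dlists k ?d" using j by (auto simp: dlists_def ilists_def)
    qed
    show "remdups (map ((!) q) (pat l)) = q" if "q \<in> dlists k ?d" for q
      using that remdups_map_nth_pat[of q l] by (auto simp: dlists_def)
    show "map ((!) (remdups j)) (pat l) = j" if "j \<in> {j \<in> ilists k m. pat j = pat l}" for j
      using that pat_recover[of j] by auto
  qed
  thus ?thesis by (simp add: bij_betw_same_card)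
qed

lemma cardB:
  assumes "l \<in> ilists k m" "m \<le> k"
  shows "card {D \<in> dlists k m. take (length (remdups l)) D = remdups l}
       = \<Prod>{(k - length (remdups l)) - (m - length (remdups l)) + 1 .. k - length (remdups l)}"
proof -
  let ?d = "length (remdups l)"
  have dm: "?d \<le> m" using assms(1) length_remdups_leq[of l] by (simp add: ilists_def)
  have sl: "set l \<subseteq> {..<k}" using assms by (simp add: ilists_def)
  have cq: "card ({..<k} - set l) = k - ?d"
    using sl by (simp add: card_Diff_subset length_remdups_card_conv)
  have "card {D. D \<in> dlists k m \<and> take ?d D = remdups l} = card {r. remdups l @ r \<in> dlists k m}"
    by (rule card_take_fiber) (use dm in \<open>auto simp: dlists_def\<close>)
  also have "{r. remdups l @ r \<in> dlists k m} = {r. length r = m - ?d \<and> distinct r \<and> set r \<subseteq> {..<k} - set l}"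
    using sl dm by (auto simp: dlists_def)
  also have "card \<dots> = \<Prod>{(k - ?d) - (m - ?d) + 1 .. k - ?d}"
    using card_lists_distinct_length_eq[of "{..<k} - set l" "m - ?d"] cq assms dm by simp
  finally show ?thesis by simp
qed

lemma prod_split_ivl:
  assumes "d \<le> m" "m \<le> (k::nat)"
  shows "\<Prod>{k - d + 1 .. k} * \<Prod>{(k - d) - (m - d) + 1 .. k - d} = \<Prod>{k - m + 1 .. k}"
proof -
  have e: "(k - d) - (m - d) = k - m" using assms by simp
  have "{k - m + 1 .. k} = {k - m + 1 .. k - d} \<union> {k - d + 1 .. k}" using assms by auto
  moreover have "{k - m + 1 .. k - d} \<inter> {k - d + 1 .. k} = {}" by auto
  ultimately have "\<Prod>{k - m + 1 .. k} = \<Prod>{k - m + 1 .. k - d} * \<Prod>{k - d + 1 .. k}"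
    by (simp add: prod.union_disjoint)
  moreover have e2: "d + (m - d) = m" using assms by simp
  ultimately show ?thesis by (simp add: e mult.commute)
qed

lemma pattern_uniform:
  assumes "m \<le> k" "k > 0"
  shows "map_pmf Fp (pmf_of_set (ilists k m \<times> dlists k m)) = pmf_of_set (ilists k m)"
proof (rule pmf_of_set_fiber[where c="\<Prod>{k - m + 1 .. k}"])
  show "finite (ilists k m \<times> dlists k m)" by simp
  show "ilists k m \<times> dlists k m \<noteq> {}" using ilists_ne[OF assms(2)] dlists_ne[OF assms(1)] by auto
  show "Fp ` (ilists k m \<times> dlists k m) = ilists k m"
  proof
    show "Fp ` (ilists k m \<times> dlists k m) \<subseteq> ilists k m"
    proof clarify
      fix j D assume j: "j \<in> ilists k m" and D: "D \<in> dlists k m"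
      have "length (remdups j) \<le> m" using j length_remdups_leq[of j] by (simp add: ilists_def)
      hence "set (pat j) \<subseteq> {..<length D}" using set_pat[of j] D by (auto simp: dlists_def)
      hence "set (Fp (j, D)) \<subseteq> {..<k}" using D by (auto simp: Fp_def dlists_def) (metis lessThan_iff nth_mem subsetD)
      thus "Fp (j, D) \<in> ilists k m" using j by (simp add: ilists_def Fp_def)
    qed
    show "ilists k m \<subseteq> Fp ` (ilists k m \<times> dlists k m)"
    proof
      fix l assume l: "l \<in> ilists k m"
      let ?d = "length (remdups l)"
      have "card {D \<in> dlists k m. take ?d D = remdups l} > 0"
      proof -
        have dm: "?d \<le> m" using l length_remdups_leq[of l] by (simp add: ilists_def)
        show ?thesis unfolding cardB[OF l assms(1)] using dm assms by (auto intro!: prod_pos)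
      qed
      then obtain D where D: "D \<in> dlists k m" "take ?d D = remdups l"
        by (metis (mono_tags, lifting) card.empty empty_Collect_eq less_irrefl)
      have "Fp (l, D) = l"
        using Fp_char[of l m D l] l D by (auto simp: ilists_def dlists_def)
      thus "l \<in> Fp ` (ilists k m \<times> dlists k m)" using l D by force
    qed
  qed
  fix l assume l: "l \<in> ilists k m"
  let ?d = "length (remdups l)"
  have dm: "?d \<le> m" using l length_remdups_leq[of l] by (simp add: ilists_def)
  have "{a \<in> ilists k m \<times> dlists k m. Fp a = l}
      = {j \<in> ilists k m. pat j = pat l} \<times> {D \<in> dlists k m. take ?d D = remdups l}"
    using Fp_char by (auto simp: ilists_def dlists_def)
  hence "card {a \<in> ilists k m \<times> dlists k m. Fp a = l}
      = card (dlists k ?d) * \<Prod>{(k - ?d) - (m - ?d) + 1 .. k - ?d}"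
    by (simp add: card_cartesian_product cardA[OF l] cardB[OF l assms(1)])
  also have "card (dlists k ?d) = \<Prod>{k - ?d + 1 .. k}"
    unfolding dlists_def using card_lists_distinct_length_eq[of "{..<k}" ?d] dm assms by simp
  finally show "card {a \<in> ilists k m \<times> dlists k m. Fp a = l} = \<Prod>{k - m + 1 .. k}"
    using prod_split_ivl[OF dm assms(1)] by simp
qed

definition Kpat :: "nat \<Rightarrow> nat multiset \<Rightarrow> nat multiset pmf" where
  "Kpat k = shuffle (\<lambda>c. map_pmf (\<lambda>j. mset (map ((!) c) (pat j))) (pmf_of_set (ilists k (length c))))"

lemma hyp_to_mult:
  assumes "length xs = k" "m \<le> k" "k > 0"
  shows "bind_pmf (hypergeometric_sample xs m) (Kpat k) = multinomial_sample xs m"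
proof -
  let ?I = "pmf_of_set (ilists k m)" and ?D = "pmf_of_set (dlists k m)"
  let ?g = "\<lambda>l. mset (map ((!) xs) l)"
  have xne: "xs \<noteq> []" using assms by auto
  have sI: "set_pmf ?I = ilists k m" using ilists_ne[OF assms(3)] by simp
  have sD: "set_pmf ?D = dlists k m" using dlists_ne[OF assms(2)] by simp
  have "bind_pmf (hypergeometric_sample xs m) (Kpat k)
      = bind_pmf ?D (\<lambda>D. map_pmf (\<lambda>j. mset (map ((!) (map ((!) xs) D)) (pat j))) (pmf_of_set (ilists k (length (map ((!) xs) D)))))"
    unfolding hyp_dlists[OF assms(2)[folded assms(1)]] Kpat_def assms(1)
    by (rule shuffle_lemma) (use dlists_ne[OF assms(2)] finite_dlists[of k m] in \<open>auto simp: dlists_def permute_list_set\<close>)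
  also have "\<dots> = bind_pmf ?D (\<lambda>D. bind_pmf ?I (\<lambda>j. return_pmf (?g (Fp (j, D)))))"
  proof (rule bind_pmf_cong[OF refl])
    fix D assume "D \<in> set_pmf ?D"
    hence D: "length D = m" using sD by (simp add: dlists_def)
    show "map_pmf (\<lambda>j. mset (map ((!) (map ((!) xs) D)) (pat j))) (pmf_of_set (ilists k (length (map ((!) xs) D))))
        = bind_pmf ?I (\<lambda>j. return_pmf (?g (Fp (j, D))))"
      unfolding map_pmf_def
    proof (rule bind_pmf_cong)
      show "pmf_of_set (ilists k (length (map ((!) xs) D))) = ?I" using D by simp
      fix j assume "j \<in> set_pmf ?I"
      hence "length j = m" using sI by (simp add: ilists_def)
      hence "length (remdups j) \<le> m" using length_remdups_leq[of j] by simp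
      hence "set (pat j) \<subseteq> {..<length D}" using set_pat[of j] D by auto
      thus "return_pmf (mset (map ((!) (map ((!) xs) D)) (pat j))) = return_pmf (?g (Fp (j, D)))"
        by (auto simp: Fp_def intro!: image_mset_cong)
    qed
  qed
  also have "\<dots> = bind_pmf ?I (\<lambda>j. bind_pmf ?D (\<lambda>D. return_pmf (?g (Fp (j, D)))))"
    by (rule bind_commute_pmf)
  also have "\<dots> = map_pmf ?g (map_pmf Fp (pair_pmf ?I ?D))"
    by (simp add: pair_pmf_def map_bind_pmf map_return_pmf)
  also have "pair_pmf ?I ?D = pmf_of_set (ilists k m \<times> dlists k m)"
    by (rule pair_pmf_of_set) (use ilists_ne[OF assms(3)] dlists_ne[OF assms(2)] in auto)
  also have "map_pmf ?g (map_pmf Fp \<dots>) = multinomial_sample xs m"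
    by (simp add: pattern_uniform assms mult_ilists[OF xne])
  finally show ?thesis .
qed

primrec rs :: "nat \<Rightarrow> real \<Rightarrow> nat set pmf" where
  "rs 0 p = return_pmf {}"
| "rs (Suc k) p = bind_pmf (bernoulli_pmf p)
     (\<lambda>b. map_pmf (\<lambda>S. if b then insert 0 (Suc ` S) else Suc ` S) (rs k p))"

lemma set_rs: "S \<in> set_pmf (rs k p) \<Longrightarrow> S \<subseteq> {..<k}"
  by (induction k arbitrary: S) (auto split: if_splits)

lemma bern_rs: "bernoulli_sample xs p = map_pmf (\<lambda>S. image_mset ((!) xs) (mset_set S)) (rs (length xs) p)"
proof (induction xs)
  case Nil thus ?case by simp
next
  case (Cons x xs)
  have key: "image_mset ((!) (x # xs)) (mset_set (if b then insert 0 (Suc ` S) else Suc ` S))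
      = (if b then add_mset x (image_mset ((!) xs) (mset_set S)) else image_mset ((!) xs) (mset_set S))"
    if "S \<in> set_pmf (rs (length xs) p)" for b S
  proof -
    have fin: "finite S" using set_rs[OF that] finite_subset by blast
    have e: "image_mset ((!) (x # xs)) (mset_set (Suc ` S)) = image_mset ((!) xs) (mset_set S)"
      by (simp add: image_mset_mset_set[symmetric] multiset.map_comp o_def)
    show ?thesis using fin e by (auto simp: mset_set.insert)
  qed
  show ?case
    by (simp add: Cons.IH map_pmf_def bind_assoc_pmf bind_return_pmf key cong: bind_pmf_cong)
qed

lemma pmf_bind_bernoulli:
  assumes "0 \<le> p" "p \<le> 1"
  shows "pmf (bind_pmf (bernoulli_pmf p) f) x = p * pmf (f True) x + (1 - p) * pmf (f False) x"
  using assms by (simp add: pmf_bind)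

lemma pmf_rs:
  assumes "0 \<le> p" "p \<le> 1"
  shows "pmf (rs k p) S = (if S \<subseteq> {..<k} then p ^ card S * (1 - p) ^ (k - card S) else 0)"
proof (induction k arbitrary: S)
  case 0
  thus ?case by (auto simp: indicator_def)
next
  case (Suc k)
  define T where "T = {x. Suc x \<in> S}"
  have injS: "inj (\<lambda>S. Suc ` S)" by (simp add: inj_image_eq_iff inj_on_def)
  have injI: "inj (\<lambda>S. insert 0 (Suc ` S))"
  proof (rule injI)
    fix A B assume h: "insert 0 (Suc ` A) = insert 0 (Suc ` B)"
    have "Suc ` A = insert 0 (Suc ` A) - {0}" "Suc ` B = insert 0 (Suc ` B) - {0}" by auto
    hence "Suc ` A = Suc ` B" using h by simp
    thus "A = B" by (simp add: inj_image_eq_iff)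
  qed
  show ?case
  proof (cases "S \<subseteq> {..<Suc k}")
    case False
    have a: "pmf (map_pmf (\<lambda>S. insert 0 (Suc ` S)) (rs k p)) S = 0"
      by (rule pmf_map_outside) (use False set_rs in fastforce)
    have b: "pmf (map_pmf (\<lambda>S. Suc ` S) (rs k p)) S = 0"
      by (rule pmf_map_outside) (use False set_rs in fastforce)
    show ?thesis using a b False assms by (simp add: pmf_bind_bernoulli)
  next
    case True
    have Tk: "T \<subseteq> {..<k}" using True by (auto simp: T_def)
    have finT: "finite T" using Tk finite_subset by blast
    have cT: "card (Suc ` T) = card T" by (simp add: card_image)
    show ?thesis
    proof (cases "0 \<in> S")
      case True0: True
      have S: "S = insert 0 (Suc ` T)"
      proof (rule set_eqI)
        fix x show "x \<in> S \<longleftrightarrow> x \<in> insert 0 (Suc ` T)" using True0 by (cases x) (auto simp: T_def)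
      qed
      have a: "pmf (map_pmf (\<lambda>S. insert 0 (Suc ` S)) (rs k p)) S = pmf (rs k p) T"
        unfolding S by (rule pmf_map_inj'[OF injI])
      have b: "pmf (map_pmf (\<lambda>S. Suc ` S) (rs k p)) S = 0"
        by (rule pmf_map_outside) (use True0 in auto)
      have cS: "card S = Suc (card T)" unfolding S using finT by (simp add: card_image)
      show ?thesis using a b Suc.IH[of T] Tk True cS assms
        by (simp add: pmf_bind_bernoulli)
    next
      case False0: False
      have S: "S = Suc ` T"
      proof (rule set_eqI)
        fix x show "x \<in> S \<longleftrightarrow> x \<in> Suc ` T" using False0 by (cases x) (auto simp: T_def)
      qed
      have a: "pmf (map_pmf (\<lambda>S. insert 0 (Suc ` S)) (rs k p)) S = 0"
        by (rule pmf_map_outside) (use False0 in auto)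
      have b: "pmf (map_pmf (\<lambda>S. Suc ` S) (rs k p)) S = pmf (rs k p) T"
        unfolding S by (rule pmf_map_inj'[OF injS])
      have cS: "card S = card T" unfolding S using finT by (simp add: card_image)
      have "card T \<le> k" using Tk by (metis card_lessThan card_mono finite_lessThan)
      hence "Suc k - card T = Suc (k - card T)" by simp
      thus ?thesis using a b Suc.IH[of T] Tk True cS assms
        by (simp add: pmf_bind_bernoulli)
    qed
  qed
qed

lemma set_pmf_binomial_le: "p \<in> {0..1} \<Longrightarrow> K \<in> set_pmf (binomial_pmf n p) \<Longrightarrow> K \<le> n"
  by (auto simp: set_pmf_binomial_eq split: if_splits)

lemma subsets_ne: assumes "K \<le> k" shows "{S. S \<subseteq> {..<(k::nat)} \<and> card S = K} \<noteq> {}"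
proof
  assume e: "{S. S \<subseteq> {..<(k::nat)} \<and> card S = K} = {}"
  have "card {S. S \<subseteq> {..<(k::nat)} \<and> card S = K} = (k choose K)"
    using n_subsets[of "{..<k}" K] by simp
  hence "(k choose K) = 0" unfolding e by simp
  thus False using assms by simp
qed
lemma subsets_fin: "finite {S. S \<subseteq> {..<(k::nat)} \<and> card S = K}"
  by (rule finite_subset[of _ "Pow {..<k}"]) auto

lemma rs_binom:
  assumes p: "0 \<le> p" "p \<le> 1"
  shows "rs k p = bind_pmf (binomial_pmf k p)
     (\<lambda>K. if K \<le> k then pmf_of_set {S. S \<subseteq> {..<k} \<and> card S = K} else return_pmf {})"
proof (rule pmf_eqI)
  fix S
  let ?f = "\<lambda>K. pmf (if K \<le> k then pmf_of_set {S. S \<subseteq> {..<k} \<and> card S = K} else return_pmf {}) S"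
  have pmfK: "?f K = (if S \<subseteq> {..<k} \<and> card S = K then 1 / real (k choose K) else 0)" if "K \<le> k" for K
    using that subsets_ne[OF that] subsets_fin[of k K] n_subsets[of "{..<k}" K] by (simp add: indicator_def)
  have "pmf (bind_pmf (binomial_pmf k p) (\<lambda>K. if K \<le> k then pmf_of_set {S. S \<subseteq> {..<k} \<and> card S = K} else return_pmf {})) S
      = (\<integral>K. ?f K \<partial>measure_pmf (binomial_pmf k p))" by (simp add: pmf_bind)
  also have "\<dots> = (\<Sum>a\<in>(if S \<subseteq> {..<k} then {card S} else {}). ?f a * pmf (binomial_pmf k p) a)"
  proof (rule integral_measure_pmf_real)
    fix a assume a: "a \<in> set_pmf (binomial_pmf k p)" "?f a \<noteq> 0"
    have ak: "a \<le> k" using set_pmf_binomial_le a(1) p by auto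
    show "a \<in> (if S \<subseteq> {..<k} then {card S} else {})" using a(2) pmfK[OF ak] ak by (auto split: if_splits)
  qed simp
  also have "\<dots> = pmf (rs k p) S"
  proof (cases "S \<subseteq> {..<k}")
    case True
    have ck: "card S \<le> k" using True by (metis card_lessThan card_mono finite_lessThan)
    have "(k choose card S) > 0" using ck by simp
    thus ?thesis using True ck pmfK[OF ck] p by (simp add: pmf_rs)
  next
    case False thus ?thesis using p by (simp add: pmf_rs)
  qed
  finally show "pmf (rs k p) S = pmf (bind_pmf (binomial_pmf k p) (\<lambda>K. if K \<le> k then pmf_of_set {S. S \<subseteq> {..<k} \<and> card S = K} else return_pmf {})) S" ..
qed

lemma bern_binom:
  assumes p: "0 \<le> p" "p \<le> 1"
  shows "bernoulli_sample xs p = bind_pmf (binomial_pmf (length xs) p) (hypergeometric_sample xs)"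
proof -
  have "bernoulli_sample xs p = map_pmf (\<lambda>S. image_mset ((!) xs) (mset_set S)) (rs (length xs) p)"
    by (rule bern_rs)
  also have "\<dots> = bind_pmf (binomial_pmf (length xs) p) (\<lambda>K. map_pmf (\<lambda>S. image_mset ((!) xs) (mset_set S))
       (if K \<le> length xs then pmf_of_set {S. S \<subseteq> {..<length xs} \<and> card S = K} else return_pmf {}))"
    by (simp add: rs_binom[OF p] map_bind_pmf)
  also have "\<dots> = bind_pmf (binomial_pmf (length xs) p) (hypergeometric_sample xs)"
  proof (rule bind_pmf_cong[OF refl])
    fix K assume "K \<in> set_pmf (binomial_pmf (length xs) p)"
    hence "K \<le> length xs" using set_pmf_binomial_le p by auto
    thus "map_pmf (\<lambda>S. image_mset ((!) xs) (mset_set S))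
       (if K \<le> length xs then pmf_of_set {S. S \<subseteq> {..<length xs} \<and> card S = K} else return_pmf {})
      = hypergeometric_sample xs K" by (simp add: hypergeometric_sample_def)
  qed
  finally show ?thesis .
qed

lemma perm_invariant:
  assumes fin: "finite A" and ne: "A \<noteq> {}" and len: "\<And>l. l \<in> A \<Longrightarrow> length l = N"
    and closed: "\<And>l p. l \<in> A \<Longrightarrow> p permutes {..<N} \<Longrightarrow> permute_list p l \<in> A"
    and p: "p permutes {..<N}"
  shows "map_pmf (permute_list p) (pmf_of_set A) = pmf_of_set A"
proof (rule map_pmf_of_set_bij_betw[OF _ ne fin])
  show "bij_betw (permute_list p) A A"
  proof (rule bij_betwI[where g="permute_list (inv p)"])
    show "permute_list p \<in> A \<rightarrow> A" using closed p by auto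
    show "permute_list (inv p) \<in> A \<rightarrow> A" using closed permutes_inv[OF p] by auto
    show "permute_list (inv p) (permute_list p x) = x" if "x \<in> A" for x
      using permute_list_inv_cancel(1)[of p x] p len[OF that] by simp
    show "permute_list p (permute_list (inv p) y) = y" if "y \<in> A" for y
      using permute_list_inv_cancel(2)[of p y] p len[OF that] by simp
  qed
qed

lemma select_uniform:
  assumes D: "D \<in> dlists k m" and kp: "k' > 0"
  shows "map_pmf (\<lambda>u. map ((!) u) D) (pmf_of_set (ilists k' k)) = pmf_of_set (ilists k' m)"
proof -
  have Dm: "length D = m" "distinct D" "set D \<subseteq> {..<k}" using D by (auto simp: dlists_def)
  have mk: "m \<le> k" using Dm by (metis card_lessThan card_mono distinct_card finite_lessThan)
  define D' where "D' = D @ sorted_list_of_set ({..<k} - set D)"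
  have D'd: "distinct D'" using Dm by (simp add: D'_def)
  have D's: "set D' = {..<k}" using Dm by (auto simp: D'_def)
  have D'l: "length D' = k" using D'd D's by (metis card_lessThan distinct_card)
  have tD: "take m D' = D" using Dm by (simp add: D'_def)
  define \<sigma> where "\<sigma> = (\<lambda>i. if i < k then D' ! i else i)"
  have bij: "bij_betw ((!) D') {..<k} {..<k}" by (rule bij_betw_nth) (use D'd D's D'l in auto)
  have \<sigma>p: "\<sigma> permutes {..<k}"
  proof (rule bij_imp_permutes)
    show "bij_betw \<sigma> {..<k} {..<k}" using bij by (rule bij_betw_cong[THEN iffD1, rotated]) (simp add: \<sigma>_def)
    show "x \<notin> {..<k} \<Longrightarrow> \<sigma> x = x" for x by (simp add: \<sigma>_def)
  qed
  have eq: "map ((!) u) D = take m (permute_list \<sigma> u)" if "length u = k" for u :: "nat list"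
  proof -
    have "permute_list \<sigma> u = map ((!) u) D'"
      unfolding permute_list_def using that D'l by (intro nth_equalityI) (auto simp: \<sigma>_def)
    thus ?thesis using tD by (metis take_map)
  qed
  have "map_pmf (\<lambda>u. map ((!) u) D) (pmf_of_set (ilists k' k))
      = map_pmf (take m) (map_pmf (permute_list \<sigma>) (pmf_of_set (ilists k' k)))"
    unfolding pmf.map_comp o_def
    by (rule map_pmf_cong[OF refl]) (use ilists_ne[OF kp] finite_ilists[of k' k] in \<open>auto simp: eq ilists_def\<close>)
  also have "map_pmf (permute_list \<sigma>) (pmf_of_set (ilists k' k)) = pmf_of_set (ilists k' k)"
    by (rule perm_invariant[OF finite_ilists ilists_ne[OF kp] _ _ \<sigma>p]) (auto simp: ilists_def permute_list_set)
  also have "map_pmf (take m) (pmf_of_set (ilists k' k)) = pmf_of_set (ilists k' m)"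
    by (rule ilists_take[OF mk kp])
  finally show ?thesis .
qed

lemma urn_composition:
  assumes "xs' \<noteq> []" "m \<le> k"
  shows "bind_pmf (pmf_of_set (ilists (length xs') k)) (\<lambda>u. hypergeometric_sample (map ((!) xs') u) m)
       = multinomial_sample xs' m"
proof -
  let ?k' = "length xs'"
  have kp: "?k' > 0" using assms by simp
  let ?I = "pmf_of_set (ilists ?k' k)" and ?D = "pmf_of_set (dlists k m)"
  let ?g = "\<lambda>l. mset (map ((!) xs') l)"
  have sI: "set_pmf ?I = ilists ?k' k" using ilists_ne[OF kp] by simp
  have sD: "set_pmf ?D = dlists k m" using dlists_ne[OF assms(2)] by simp
  have "bind_pmf ?I (\<lambda>u. hypergeometric_sample (map ((!) xs') u) m)
      = bind_pmf ?I (\<lambda>u. bind_pmf ?D (\<lambda>D. return_pmf (?g (map ((!) u) D))))"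
  proof (rule bind_pmf_cong[OF refl])
    fix u assume "u \<in> set_pmf ?I"
    hence u: "length u = k" using sI by (simp add: ilists_def)
    have "hypergeometric_sample (map ((!) xs') u) m = map_pmf (\<lambda>l. mset (map ((!) (map ((!) xs') u)) l)) ?D"
      using hyp_dlists[of m "map ((!) xs') u"] u assms by simp
    also have "\<dots> = bind_pmf ?D (\<lambda>D. return_pmf (?g (map ((!) u) D)))"
      unfolding map_pmf_def
      by (rule bind_pmf_cong[OF refl]) (use sD u in \<open>auto simp: dlists_def intro!: image_mset_cong\<close>)
    finally show "hypergeometric_sample (map ((!) xs') u) m = bind_pmf ?D (\<lambda>D. return_pmf (?g (map ((!) u) D)))" .
  qed
  also have "\<dots> = bind_pmf ?D (\<lambda>D. bind_pmf ?I (\<lambda>u. return_pmf (?g (map ((!) u) D))))"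
    by (rule bind_commute_pmf)
  also have "\<dots> = bind_pmf ?D (\<lambda>D. map_pmf ?g (pmf_of_set (ilists ?k' m)))"
  proof (rule bind_pmf_cong[OF refl])
    fix D assume "D \<in> set_pmf ?D"
    hence D: "D \<in> dlists k m" using sD by simp
    have "bind_pmf ?I (\<lambda>u. return_pmf (?g (map ((!) u) D))) = map_pmf ?g (map_pmf (\<lambda>u. map ((!) u) D) ?I)"
      by (simp add: map_pmf_def bind_assoc_pmf bind_return_pmf multiset.map_comp)
    thus "bind_pmf ?I (\<lambda>u. return_pmf (?g (map ((!) u) D))) = map_pmf ?g (pmf_of_set (ilists ?k' m))"
      using select_uniform[OF D kp] by simp
  qed
  also have "\<dots> = multinomial_sample xs' m"
    by (simp add: mult_ilists[OF assms(1)])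
  finally show ?thesis .
qed

lemma coupon:
  assumes "xs' \<noteq> []"
  shows "measure_pmf.prob (pmf_of_set (ilists (length xs') k))
           {u. real \<Delta> \<le> real (num_colors xs') - real (num_colors (map ((!) xs') u))}
         \<le> real (length xs' choose \<Delta>) * (1 - real \<Delta> / real (length xs')) ^ k"
proof -
  let ?k' = "length xs'"
  let ?I = "pmf_of_set (ilists ?k' k)"
  let ?bad = "{u. real \<Delta> \<le> real (num_colors xs') - real (num_colors (map ((!) xs') u))}"
  let ?Fam = "{T. T \<subseteq> {..<?k'} \<and> card T = \<Delta>}"
  let ?E = "\<lambda>T. {u. set u \<inter> T = {}}"
  have kp: "?k' > 0" using assms by simp
  have sI: "set_pmf ?I = ilists ?k' k" using ilists_ne[OF kp] by simp
  have sub: "?bad \<inter> set_pmf ?I \<subseteq> (\<Union>T\<in>?Fam. ?E T)"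
  proof
    fix u assume u: "u \<in> ?bad \<inter> set_pmf ?I"
    hence ul: "set u \<subseteq> {..<?k'}" using sI by (simp add: ilists_def)
    let ?C = "set (map ((!) xs') u)"
    have Csub: "?C \<subseteq> set xs'" using ul by auto
    let ?M = "set xs' - ?C"
    have "card ?M = card (set xs') - card ?C" by (rule card_Diff_subset) (use Csub in auto)
    moreover have "real \<Delta> \<le> real (card (set xs')) - real (card ?C)" using u by (simp add: num_colors_def)
    moreover have "card ?C \<le> card (set xs')" using Csub by (simp add: card_mono)
    ultimately have "\<Delta> \<le> card ?M" by linarith
    then obtain M' where M': "M' \<subseteq> ?M" "card M' = \<Delta>" "finite M'" by (rule obtain_subset_with_card_n)
    let ?T = "idx xs' ` M'"
    have inj: "inj_on (idx xs') M'"
      by (rule inj_onI) (metis M'(1) DiffD1 nth_idx subsetD)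
    have "?T \<in> ?Fam" using M' inj by (auto simp: card_image intro!: idx_lt)
    moreover have "set u \<inter> ?T = {}"
    proof (rule ccontr)
      assume "set u \<inter> ?T \<noteq> {}"
      then obtain c where c: "c \<in> M'" "idx xs' c \<in> set u" by auto
      have "xs' ! idx xs' c \<in> ?C" using c(2) by auto
      moreover have "xs' ! idx xs' c = c" using c(1) M'(1) by (auto intro!: nth_idx)
      ultimately show False using c(1) M'(1) by auto
    qed
    ultimately show "u \<in> (\<Union>T\<in>?Fam. ?E T)" by blast
  qed
  have finF: "finite ?Fam" by (rule finite_subset[of _ "Pow {..<?k'}"]) auto
  have ET: "measure_pmf.prob ?I (?E T) = (1 - real \<Delta> / real ?k') ^ k" if T: "T \<in> ?Fam" for T
  proof -
    have Tk: "\<Delta> \<le> ?k'" using T by (metis (mono_tags, lifting) card_lessThan card_mono finite_lessThan mem_Collect_eq)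
    have fT: "finite T" using T finite_subset by blast
    have "ilists ?k' k \<inter> ?E T = {l. set l \<subseteq> {..<?k'} - T \<and> length l = k}" by (auto simp: ilists_def)
    hence "card (ilists ?k' k \<inter> ?E T) = (?k' - \<Delta>) ^ k"
      using card_lists_length_eq[of "{..<?k'} - T" k] T by (simp add: card_Diff_subset fT)
    hence "measure_pmf.prob ?I (?E T) = real ((?k' - \<Delta>) ^ k) / real (?k' ^ k)"
      using ilists_ne[OF kp] by (simp add: measure_pmf_of_set card_ilists)
    also have "\<dots> = ((real ?k' - real \<Delta>) / real ?k') ^ k"
      using Tk by (simp add: power_divide of_nat_diff)
    also have "(real ?k' - real \<Delta>) / real ?k' = 1 - real \<Delta> / real ?k'" using kp by (simp add: field_simps)
    finally show ?thesis .
  qed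
  have "measure_pmf.prob ?I ?bad = measure_pmf.prob ?I (?bad \<inter> set_pmf ?I)"
    by (simp add: measure_Int_set_pmf)
  also have "\<dots> \<le> measure_pmf.prob ?I (\<Union>T\<in>?Fam. ?E T)"
    by (rule measure_pmf.finite_measure_mono[OF sub]) simp
  also have "\<dots> \<le> (\<Sum>T\<in>?Fam. measure_pmf.prob ?I (?E T))"
    by (rule measure_UNION_le[OF finF]) simp
  also have "\<dots> = (\<Sum>T\<in>?Fam. (1 - real \<Delta> / real ?k') ^ k)" by (rule sum.cong) (auto simp: ET)
  also have "\<dots> = real (?k' choose \<Delta>) * (1 - real \<Delta> / real ?k') ^ k"
    using n_subsets[of "{..<?k'}" \<Delta>] by simp
  finally show ?thesis .
qed

lemma exp_series: "(\<lambda>n. x ^ n / fact n) sums exp (x::real)"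
  using exp_converges[of x] by (simp add: divide_inverse mult.commute)

lemma poi_upper:
  assumes "l \<ge> 0"
  shows "measure_pmf.prob (poi l) {N. x \<le> N} \<le> exp l / 2 ^ x"
proof (cases "l = 0")
  case True
  thus ?thesis by (cases x) (auto simp: poi_def indicator_def)
next
  case False
  hence lp: "l > 0" using assms by simp
  let ?a = "\<lambda>n. l ^ n / fact n"
  let ?b = "\<lambda>n. (2 * l) ^ n / fact n / 2 ^ x"
  have sa: "summable ?a" using exp_series sums_summable by blast
  have sb0: "?b sums (exp (2 * l) / 2 ^ x)" using sums_divide[OF exp_series[of "2 * l"]] by simp
  have sb: "summable ?b" using sb0 sums_summable by blast
  have P: "measure_pmf.prob (poi l) {N. x \<le> N} = 1 - measure_pmf.prob (poi l) {..<x}"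
  proof -
    have "{N. x \<le> N} = UNIV - {..<x}" by auto
    thus ?thesis using measure_pmf.prob_compl[of "{..<x}" "poi l"] by simp
  qed
  have Q: "measure_pmf.prob (poi l) {..<x} = exp (- l) * (\<Sum>j<x. ?a j)"
    using lp by (simp add: poi_def measure_measure_pmf_finite sum_distrib_left field_simps)
  have E: "exp l = (\<Sum>n. ?a (n + x)) + (\<Sum>j<x. ?a j)"
    using suminf_split_initial_segment[OF sa, of x] sums_unique[OF exp_series[of l]] by simp
  have "(\<Sum>n. ?a (n + x)) \<le> (\<Sum>n. ?b (n + x))"
  proof (rule suminf_le)
    show "summable (\<lambda>n. ?a (n + x))" using sa summable_iff_shift[of ?a x] by simp
    show "summable (\<lambda>n. ?b (n + x))" using sb summable_iff_shift[of ?b x] by simp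
    fix n
    have "?b (n + x) = 2 ^ n * (l ^ (n + x) / fact (n + x))"
      by (simp add: power_mult_distrib power_add field_simps)
    moreover have "l ^ (n + x) / fact (n + x) \<le> 2 ^ n * (l ^ (n + x) / fact (n + x))"
    proof -
      have "0 \<le> l ^ (n + x) / fact (n + x)" using lp by simp
      moreover have "(1::real) \<le> 2 ^ n" by simp
      ultimately show ?thesis using mult_right_mono[of 1 "2^n" "l ^ (n + x) / fact (n + x)"] by simp
    qed
    ultimately show "?a (n + x) \<le> ?b (n + x)" by simp
  qed
  also have "(\<Sum>n. ?b (n + x)) \<le> suminf ?b"
  proof -
    have "suminf ?b = (\<Sum>n. ?b (n + x)) + (\<Sum>j<x. ?b j)" by (rule suminf_split_initial_segment[OF sb])
    moreover have "(\<Sum>j<x. ?b j) \<ge> 0" using lp by (intro sum_nonneg) simp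
    ultimately show ?thesis by simp
  qed
  also have "suminf ?b = exp (2 * l) / 2 ^ x" using sums_unique[OF sb0] by simp
  finally have S: "(\<Sum>n. ?a (n + x)) \<le> exp (2 * l) / 2 ^ x" .
  have "measure_pmf.prob (poi l) {N. x \<le> N} = exp (- l) * (\<Sum>n. ?a (n + x))"
  proof -
    have "exp (- l) * (\<Sum>n. ?a (n + x)) = exp (- l) * (exp l - (\<Sum>j<x. ?a j))" using E by simp
    also have "\<dots> = exp (- l) * exp l - exp (- l) * (\<Sum>j<x. ?a j)" by (simp add: right_diff_distrib)
    also have "exp (- l) * exp l = 1" by (simp add: exp_minus_inverse mult.commute)
    finally show ?thesis using P Q by simp
  qed
  also have "\<dots> \<le> exp (- l) * (exp (2 * l) / 2 ^ x)" by (rule mult_left_mono[OF S]) simp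
  also have "\<dots> = exp l / 2 ^ x" by (simp add: exp_add[symmetric])
  finally show ?thesis .
qed

lemma poi_lower:
  assumes "l \<ge> 0"
  shows "measure_pmf.prob (poi l) {N. N < m} \<le> 2 ^ m * exp (- l / 2)"
proof (cases "l = 0")
  case True
  thus ?thesis using one_le_power[of "2::real" m] by (cases m) (auto simp: poi_def indicator_def)
next
  case False
  hence lp: "l > 0" using assms by simp
  let ?c = "\<lambda>n. (l / 2) ^ n / fact n"
  have sc: "summable ?c" using exp_series sums_summable by blast
  have "measure_pmf.prob (poi l) {N. N < m} = (\<Sum>j<m. l ^ j / fact j * exp (- l))"
    using lp by (simp add: poi_def measure_measure_pmf_finite lessThan_def[symmetric])
  also have "\<dots> \<le> (\<Sum>j<m. 2 ^ m * exp (- l) * ?c j)"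
  proof (rule sum_mono)
    fix j assume "j \<in> {..<m}"
    hence "(2::real) ^ j \<le> 2 ^ m" by (intro power_increasing) auto
    hence "l ^ j \<le> 2 ^ m * (l / 2) ^ j"
      using lp by (simp add: power_divide field_simps)
    hence "l ^ j * exp (- l) / fact j \<le> 2 ^ m * (l / 2) ^ j * exp (- l) / fact j"
      by (intro divide_right_mono mult_right_mono) auto
    moreover have "l ^ j / fact j * exp (- l) = l ^ j * exp (- l) / fact j" by simp
    moreover have "2 ^ m * exp (- l) * ?c j = 2 ^ m * (l / 2) ^ j * exp (- l) / fact j" by simp
    ultimately show "l ^ j / fact j * exp (- l) \<le> 2 ^ m * exp (- l) * ?c j" by linarith
  qed
  also have "\<dots> = 2 ^ m * exp (- l) * (\<Sum>j<m. ?c j)" by (simp add: sum_distrib_left)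
  also have "(\<Sum>j<m. ?c j) \<le> suminf ?c"
    by (rule sum_le_suminf[OF sc]) (use lp in auto)
  hence "2 ^ m * exp (- l) * (\<Sum>j<m. ?c j) \<le> 2 ^ m * exp (- l) * suminf ?c"
    by (intro mult_left_mono) auto
  also have "suminf ?c = exp (l / 2)" using sums_unique[OF exp_series[of "l/2"]] by simp
  also have "2 ^ m * exp (- l) * exp (l / 2) = 2 ^ m * exp (- l / 2)"
    by (simp add: exp_add[symmetric])
  finally show ?thesis .
qed

lemma prob_le_weighted:
  assumes "set_pmf M \<subseteq> B" "finite B" "\<And>j. j \<in> B \<Longrightarrow> 0 \<le> w j" "\<And>j. j \<in> A \<Longrightarrow> j \<in> B \<Longrightarrow> 1 \<le> w j"
  shows "measure_pmf.prob M A \<le> (\<Sum>j\<in>B. pmf M j * w j)"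
proof -
  have "measure_pmf.prob M A = measure_pmf.prob M (A \<inter> set_pmf M)" by (simp add: measure_Int_set_pmf)
  also have "\<dots> \<le> measure_pmf.prob M (A \<inter> B)"
    by (rule measure_pmf.finite_measure_mono) (use assms(1) in auto)
  also have "\<dots> = (\<Sum>j\<in>A \<inter> B. pmf M j)" using assms(2) by (simp add: measure_measure_pmf_finite)
  also have "\<dots> \<le> (\<Sum>j\<in>A \<inter> B. pmf M j * w j)"
  proof (rule sum_mono)
    fix j assume "j \<in> A \<inter> B"
    hence "1 \<le> w j" using assms(4) by auto
    thus "pmf M j \<le> pmf M j * w j" using mult_left_mono[of 1 "w j" "pmf M j"] by simp
  qed
  also have "\<dots> \<le> (\<Sum>j\<in>B. pmf M j * w j)"
    by (rule sum_mono2) (use assms(2,3) in auto)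
  finally show ?thesis .
qed

lemma binom_upper:
  assumes p: "0 \<le> p" "p \<le> 1"
  shows "measure_pmf.prob (binomial_pmf k p) {K. x \<le> K} \<le> exp (real k * p) / 2 ^ x"
proof -
  have "measure_pmf.prob (binomial_pmf k p) {K. x \<le> K} \<le> (\<Sum>j\<in>{..k}. pmf (binomial_pmf k p) j * (2 ^ j / 2 ^ x))"
  proof (rule prob_le_weighted)
    show "set_pmf (binomial_pmf k p) \<subseteq> {..k}" using set_pmf_binomial_le[of p] p by auto
    fix j assume "j \<in> {K. x \<le> K}"
    thus "1 \<le> (2::real) ^ j / 2 ^ x" by (simp add: power_increasing)
  qed auto
  also have "\<dots> = (\<Sum>j\<le>k. real (k choose j) * (2 * p) ^ j * (1 - p) ^ (k - j)) / 2 ^ x"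
    using p by (simp add: sum_divide_distrib power_mult_distrib field_simps)
  also have "(\<Sum>j\<le>k. real (k choose j) * (2 * p) ^ j * (1 - p) ^ (k - j)) = (2 * p + (1 - p)) ^ k"
    by (rule binomial_ring[symmetric])
  also have "(2 * p + (1 - p)) ^ k = (1 + p) ^ k" by (simp add: add.commute)
  also have "(1 + p) ^ k \<le> exp p ^ k" by (rule power_mono) (use p in auto)
  also have "exp p ^ k = exp (real k * p)" by (simp add: exp_of_nat_mult)
  finally show ?thesis by (simp add: divide_right_mono)
qed

lemma binom_lower:
  assumes p: "0 \<le> p" "p \<le> 1"
  shows "measure_pmf.prob (binomial_pmf k p) {K. K < m} \<le> 2 ^ m * exp (- (real k * p) / 2)"
proof -
  have "measure_pmf.prob (binomial_pmf k p) {K. K < m} \<le> (\<Sum>j\<in>{..k}. pmf (binomial_pmf k p) j * (2 ^ m * (1 / 2) ^ j))"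
  proof (rule prob_le_weighted)
    show "set_pmf (binomial_pmf k p) \<subseteq> {..k}" using set_pmf_binomial_le[of p] p by auto
    fix j assume "j \<in> {K. K < m}"
    hence "(2::real) ^ j \<le> 2 ^ m" by (intro power_increasing) auto
    thus "1 \<le> (2::real) ^ m * (1 / 2) ^ j" by (simp add: power_one_over field_simps)
  qed auto
  also have "\<dots> = 2 ^ m * (\<Sum>j\<le>k. real (k choose j) * (p / 2) ^ j * (1 - p) ^ (k - j))"
    using p by (simp add: sum_distrib_left power_mult_distrib field_simps)
  also have "(\<Sum>j\<le>k. real (k choose j) * (p / 2) ^ j * (1 - p) ^ (k - j)) = (p / 2 + (1 - p)) ^ k"
    by (rule binomial_ring[symmetric])
  also have "(p / 2 + (1 - p)) ^ k \<le> exp (- p / 2) ^ k"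
    by (rule power_mono) (use p exp_ge_add_one_self[of "- p / 2"] in auto)
  also have "exp (- p / 2) ^ k = exp (- (real k * p) / 2)" by (simp add: exp_of_nat_mult[symmetric])
  finally show ?thesis by simp
qed

lemma measure_bind_pmf_real:
  "measure_pmf.prob (bind_pmf N f) A = (\<integral>x. measure_pmf.prob (f x) A \<partial>measure_pmf N)"
  unfolding bind_pmf.rep_eq
  by (auto simp: measure_pmf.measure_bind[where N="count_space UNIV"] measure_subprob measure_nonneg
           intro!: measure_pmf.integrable_const_bound[where B=1])

lemma mult_size: assumes "xs \<noteq> []" "S \<in> set_pmf (multinomial_sample xs N)" shows "size S = N"
proof -
  have "set_pmf (pmf_of_set (ilists (length xs) N)) = ilists (length xs) N" using ilists_ne assms(1) by simp
  thus ?thesis using assms by (auto simp: mult_ilists ilists_def)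
qed

lemma hyp_size: assumes "N \<le> length xs" "S \<in> set_pmf (hypergeometric_sample xs N)" shows "size S = N"
proof -
  have "set_pmf (pmf_of_set (dlists (length xs) N)) = dlists (length xs) N" using dlists_ne assms(1) by simp
  thus ?thesis using assms by (auto simp: hyp_dlists dlists_def)
qed

definition liftK :: "(nat multiset \<Rightarrow> real pmf) \<Rightarrow> (nat multiset \<Rightarrow> nat multiset option pmf) \<Rightarrow> nat multiset \<Rightarrow> real pmf" where
  "liftK est K S = bind_pmf (K S) (\<lambda>oS. case oS of Some S' \<Rightarrow> est S' | None \<Rightarrow> return_pmf 0)"

lemma admits_nonneg: "admits_estimator s k \<Delta> \<delta> \<Longrightarrow> 0 \<le> \<delta>"
  unfolding admits_estimator_def
  by (metis length_replicate measure_nonneg order_trans)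

lemma admits_transfer:
  assumes adm: "admits_estimator s2 k \<Delta> \<delta>"
    and rep: "\<And>xs. length xs = k \<Longrightarrow> bind_pmf (s1 xs) K
        = bind_pmf Q (\<lambda>N. if N \<in> G then map_pmf Some (T xs N) else return_pmf None)"
    and s2: "\<And>xs. length xs = k \<Longrightarrow> s2 xs = bind_pmf Q (T xs)"
    and eps: "measure_pmf.prob Q (- G) \<le> \<epsilon>"
  shows "admits_estimator s1 k \<Delta> (\<delta> + \<epsilon>)"
proof -
  obtain est where est: "\<And>xs. length xs = k \<Longrightarrow>
      measure_pmf.prob (bind_pmf (s2 xs) est) {c. real \<Delta> \<le> \<bar>c - real (num_colors xs)\<bar>} \<le> \<delta>"
    using adm unfolding admits_estimator_def by blast
  show ?thesis unfolding admits_estimator_def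
  proof (intro exI[of _ "liftK est K"] allI impI)
    fix xs :: "nat list" assume len: "length xs = k"
    let ?E = "{c. real \<Delta> \<le> \<bar>c - real (num_colors xs)\<bar>}"
    let ?g = "\<lambda>N. measure_pmf.prob (bind_pmf (T xs N) est) ?E"
    let ?h = "\<lambda>N. if N \<in> G then ?g N else measure_pmf.prob (return_pmf (0::real)) ?E"
    have "bind_pmf (s1 xs) (liftK est K) = bind_pmf (bind_pmf (s1 xs) K) (\<lambda>oS. case oS of Some S' \<Rightarrow> est S' | None \<Rightarrow> return_pmf 0)"
      by (simp add: liftK_def[abs_def] bind_assoc_pmf)
    also have "\<dots> = bind_pmf Q (\<lambda>N. if N \<in> G then bind_pmf (T xs N) est else return_pmf 0)"
      unfolding rep[OF len] bind_assoc_pmf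
      by (rule bind_pmf_cong[OF refl]) (simp add: bind_map_pmf bind_return_pmf)
    finally have eq: "bind_pmf (s1 xs) (liftK est K) = bind_pmf Q (\<lambda>N. if N \<in> G then bind_pmf (T xs N) est else return_pmf 0)" .
    have "measure_pmf.prob (bind_pmf (s1 xs) (liftK est K)) ?E = (\<integral>N. ?h N \<partial>measure_pmf Q)"
      unfolding eq measure_bind_pmf_real[of Q] by (rule Bochner_Integration.integral_cong) auto
    also have "\<dots> \<le> (\<integral>N. ?g N + indicator (- G) N \<partial>measure_pmf Q)"
    proof (rule integral_mono)
      show "integrable (measure_pmf Q) ?h"
        by (rule measure_pmf.integrable_const_bound[where B=1]) auto
      show "integrable (measure_pmf Q) (\<lambda>N. ?g N + indicator (- G) N)"
        by (rule measure_pmf.integrable_const_bound[where B=2])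
           (auto intro!: order.trans[OF abs_triangle_ineq] add_mono order.trans[OF measure_pmf.prob_le_1] simp: indicator_def)
      fix N show "?h N \<le> ?g N + indicator (- G) N"
        by (auto simp: indicator_def)
    qed
    also have "\<dots> = (\<integral>N. ?g N \<partial>measure_pmf Q) + (\<integral>N. indicator (- G) N \<partial>measure_pmf Q)"
      by (rule Bochner_Integration.integral_add)
         (auto intro!: measure_pmf.integrable_const_bound[where B=1])
    also have "(\<integral>N. ?g N \<partial>measure_pmf Q) = measure_pmf.prob (bind_pmf (s2 xs) est) ?E"
      by (simp add: s2[OF len] measure_bind_pmf_real bind_assoc_pmf)
    also have "(\<integral>N. indicator (- G) N \<partial>measure_pmf Q) = measure_pmf.prob Q (- G)"
      by simp
    finally show "measure_pmf.prob (bind_pmf (s1 xs) (liftK est K)) ?E \<le> \<delta> + \<epsilon>"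
      using est[OF len] eps by linarith
  qed
qed

lemma admits_Delta0: assumes "admits_estimator s k 0 \<delta>" shows "1 \<le> \<delta>"
proof -
  obtain est where e: "\<And>xs. length xs = k \<Longrightarrow>
      measure_pmf.prob (bind_pmf (s xs) est) {c. real 0 \<le> \<bar>c - real (num_colors xs)\<bar>} \<le> \<delta>"
    using assms unfolding admits_estimator_def by blast
  have "{c. real 0 \<le> \<bar>c - real (num_colors (replicate k 0))\<bar>} = UNIV" by auto
  thus ?thesis using e[of "replicate k 0"] by simp
qed

lemma admits_full:
  assumes "\<And>xs. length xs = k \<Longrightarrow> s xs = return_pmf (mset xs)"
    and "0 \<le> \<delta>" and "\<Delta> = 0 \<Longrightarrow> 1 \<le> \<delta>"
  shows "admits_estimator s k \<Delta> \<delta>"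
  unfolding admits_estimator_def
proof (intro exI[of _ "\<lambda>S. return_pmf (real (card (set_mset S)))"] allI impI)
  fix xs :: "nat list" assume "length xs = k"
  thus "measure_pmf.prob (bind_pmf (s xs) (\<lambda>S. return_pmf (real (card (set_mset S)))))
          {c. real \<Delta> \<le> \<bar>c - real (num_colors xs)\<bar>} \<le> \<delta>"
    using assms by (cases "\<Delta> = 0") (auto simp: num_colors_def indicator_def bind_return_pmf)
qed

lemma hyp_full: "hypergeometric_sample xs (length xs) = return_pmf (mset xs)"
proof -
  have "{S. S \<subseteq> {..<length xs} \<and> card S = length xs} = {{..<length xs}}"
  proof (intro set_eqI iffI)
    fix S assume "S \<in> {S. S \<subseteq> {..<length xs} \<and> card S = length xs}"
    thus "S \<in> {{..<length xs}}" using card_subset_eq[of "{..<length xs}" S] by auto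
  qed auto
  moreover have "image_mset ((!) xs) (mset_set {..<length xs}) = mset xs"
  proof -
    have "mset_set {..<length xs} = mset [0..<length xs]" by (simp add: mset_upt atLeast0LessThan)
    thus ?thesis by (metis mset_map map_nth)
  qed
  ultimately show ?thesis by (simp add: hypergeometric_sample_def pmf_of_set_singleton)
qed

lemma samplers_empty:
  "multinomial_sample [] m = return_pmf {#}"
  "hypergeometric_sample [] 0 = return_pmf {#}"
  "bernoulli_sample [] p = return_pmf {#}"
  "poisson_sample [] l = return_pmf {#}"
proof -
  show m: "multinomial_sample [] m = return_pmf {#}" for m by (cases m) auto
  show "hypergeometric_sample [] 0 = return_pmf {#}" using hyp_full[of "[]"] by simp
  show "bernoulli_sample [] p = return_pmf {#}" by simp
  show "poisson_sample [] l = return_pmf {#}" by (simp add: poisson_sample_def m)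
qed

lemma admits_k0:
  "admits_estimator s 0 \<Delta> \<delta> \<Longrightarrow> s [] = return_pmf {#} \<Longrightarrow> s' [] = return_pmf {#} \<Longrightarrow> admits_estimator s' 0 \<Delta> \<delta>"
  by (rule admits_full) (auto dest: admits_nonneg admits_Delta0)

lemma adm_a:
  assumes "admits_estimator (\<lambda>xs. multinomial_sample xs m) k \<Delta> \<delta>" "m \<le> k" "k > 0"
  shows "admits_estimator (\<lambda>xs. hypergeometric_sample xs m) k \<Delta> \<delta>"
proof -
  have "admits_estimator (\<lambda>xs. hypergeometric_sample xs m) k \<Delta> (\<delta> + 0)"
  proof (rule admits_transfer[OF assms(1), where K="\<lambda>S. map_pmf Some (Kpat k S)" and Q="return_pmf (0::nat)"
        and G=UNIV and T="\<lambda>xs N. multinomial_sample xs m"])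
    fix xs :: "nat list" assume len: "length xs = k"
    show "bind_pmf (hypergeometric_sample xs m) (\<lambda>S. map_pmf Some (Kpat k S))
        = bind_pmf (return_pmf 0) (\<lambda>N. if N \<in> UNIV then map_pmf Some (multinomial_sample xs m) else return_pmf None)"
      using hyp_to_mult[OF len assms(2,3)] by (simp add: bind_return_pmf map_bind_pmf[symmetric])
    show "multinomial_sample xs m = bind_pmf (return_pmf 0) (\<lambda>N. multinomial_sample xs m)" by simp
  qed simp
  thus ?thesis by simp
qed

lemma adm_c:
  assumes "admits_estimator (\<lambda>xs. poisson_sample xs l) k \<Delta> \<delta>" "k > 0"
  shows "admits_estimator (\<lambda>xs. multinomial_sample xs m) k \<Delta> (\<delta> + measure_pmf.prob (poi l) (- {N. N \<le> m}))"
proof (rule admits_transfer[OF assms(1), where Q="poi l" and G="{N. N \<le> m}" and T="\<lambda>xs N. multinomial_sample xs N"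
      and K="\<lambda>S. bind_pmf (poi l) (\<lambda>N. if N \<le> m then map_pmf Some (dropk N S) else return_pmf None)"])
  fix xs :: "nat list" assume len: "length xs = k"
  hence xne: "xs \<noteq> []" using assms(2) by auto
  have "bind_pmf (multinomial_sample xs m) (\<lambda>S. bind_pmf (poi l) (\<lambda>N. if N \<le> m then map_pmf Some (dropk N S) else return_pmf None))
      = bind_pmf (poi l) (\<lambda>N. bind_pmf (multinomial_sample xs m) (\<lambda>S. if N \<le> m then map_pmf Some (dropk N S) else return_pmf None))"
    by (rule bind_commute_pmf)
  also have "\<dots> = bind_pmf (poi l) (\<lambda>N. if N \<in> {N. N \<le> m} then map_pmf Some (multinomial_sample xs N) else return_pmf None)"
    by (rule bind_pmf_cong[OF refl]) (auto simp: map_bind_pmf[symmetric] mult_drop[OF xne])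
  finally show "bind_pmf (multinomial_sample xs m) (\<lambda>S. bind_pmf (poi l) (\<lambda>N. if N \<le> m then map_pmf Some (dropk N S) else return_pmf None))
      = bind_pmf (poi l) (\<lambda>N. if N \<in> {N. N \<le> m} then map_pmf Some (multinomial_sample xs N) else return_pmf None)" .
  show "poisson_sample xs l = bind_pmf (poi l) (multinomial_sample xs)" by (simp add: poisson_sample_def)
qed simp

lemma adm_d:
  assumes "admits_estimator (\<lambda>xs. multinomial_sample xs m) k \<Delta> \<delta>" "k > 0"
  shows "admits_estimator (\<lambda>xs. poisson_sample xs l) k \<Delta> (\<delta> + measure_pmf.prob (poi l) (- {N. m \<le> N}))"
proof (rule admits_transfer[OF assms(1), where Q="poi l" and G="{N. m \<le> N}" and T="\<lambda>xs N. multinomial_sample xs m"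
      and K="\<lambda>S. if m \<le> size S then map_pmf Some (dropk m S) else return_pmf None"])
  fix xs :: "nat list" assume len: "length xs = k"
  hence xne: "xs \<noteq> []" using assms(2) by auto
  have "bind_pmf (poisson_sample xs l) (\<lambda>S. if m \<le> size S then map_pmf Some (dropk m S) else return_pmf None)
      = bind_pmf (poi l) (\<lambda>N. bind_pmf (multinomial_sample xs N) (\<lambda>S. if m \<le> size S then map_pmf Some (dropk m S) else return_pmf None))"
    by (simp add: poisson_sample_def bind_assoc_pmf)
  also have "\<dots> = bind_pmf (poi l) (\<lambda>N. if N \<in> {N. m \<le> N} then map_pmf Some (multinomial_sample xs m) else return_pmf None)"
  proof (rule bind_pmf_cong[OF refl])
    fix N
    have "bind_pmf (multinomial_sample xs N) (\<lambda>S. if m \<le> size S then map_pmf Some (dropk m S) else return_pmf None)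
        = bind_pmf (multinomial_sample xs N) (\<lambda>S. if m \<le> N then map_pmf Some (dropk m S) else return_pmf None)"
      by (rule bind_pmf_cong[OF refl]) (simp add: mult_size[OF xne])
    also have "\<dots> = (if N \<in> {N. m \<le> N} then map_pmf Some (multinomial_sample xs m) else return_pmf None)"
      by (auto simp: map_bind_pmf[symmetric] mult_drop[OF xne])
    finally show "bind_pmf (multinomial_sample xs N) (\<lambda>S. if m \<le> size S then map_pmf Some (dropk m S) else return_pmf None)
        = (if N \<in> {N. m \<le> N} then map_pmf Some (multinomial_sample xs m) else return_pmf None)" .
  qed
  finally show "bind_pmf (poisson_sample xs l) (\<lambda>S. if m \<le> size S then map_pmf Some (dropk m S) else return_pmf None)
      = bind_pmf (poi l) (\<lambda>N. if N \<in> {N. m \<le> N} then map_pmf Some (multinomial_sample xs m) else return_pmf None)" .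
  show "multinomial_sample xs m = bind_pmf (poi l) (\<lambda>N. multinomial_sample xs m)" by simp
qed simp

lemma adm_e:
  assumes "admits_estimator (\<lambda>xs. bernoulli_sample xs p) k \<Delta> \<delta>" "0 \<le> p" "p \<le> 1" "m \<le> k"
  shows "admits_estimator (\<lambda>xs. hypergeometric_sample xs m) k \<Delta> (\<delta> + measure_pmf.prob (binomial_pmf k p) (- {K. K \<le> m}))"
proof (rule admits_transfer[OF assms(1), where Q="binomial_pmf k p" and G="{K. K \<le> m}" and T="\<lambda>xs K. hypergeometric_sample xs K"
      and K="\<lambda>S. bind_pmf (binomial_pmf k p) (\<lambda>K. if K \<le> m then map_pmf Some (dropk K S) else return_pmf None)"])
  fix xs :: "nat list" assume len: "length xs = k"
  have "bind_pmf (hypergeometric_sample xs m) (\<lambda>S. bind_pmf (binomial_pmf k p) (\<lambda>K. if K \<le> m then map_pmf Some (dropk K S) else return_pmf None))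
      = bind_pmf (binomial_pmf k p) (\<lambda>K. bind_pmf (hypergeometric_sample xs m) (\<lambda>S. if K \<le> m then map_pmf Some (dropk K S) else return_pmf None))"
    by (rule bind_commute_pmf)
  also have "\<dots> = bind_pmf (binomial_pmf k p) (\<lambda>K. if K \<in> {K. K \<le> m} then map_pmf Some (hypergeometric_sample xs K) else return_pmf None)"
    by (rule bind_pmf_cong[OF refl]) (use assms(4) len in \<open>auto simp: map_bind_pmf[symmetric] hyp_drop\<close>)
  finally show "bind_pmf (hypergeometric_sample xs m) (\<lambda>S. bind_pmf (binomial_pmf k p) (\<lambda>K. if K \<le> m then map_pmf Some (dropk K S) else return_pmf None))
      = bind_pmf (binomial_pmf k p) (\<lambda>K. if K \<in> {K. K \<le> m} then map_pmf Some (hypergeometric_sample xs K) else return_pmf None)" .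
  show "bernoulli_sample xs p = bind_pmf (binomial_pmf k p) (hypergeometric_sample xs)"
    using bern_binom[OF assms(2,3)] len by simp
qed simp

lemma adm_f:
  assumes "admits_estimator (\<lambda>xs. hypergeometric_sample xs m) k \<Delta> \<delta>" "0 \<le> p" "p \<le> 1" "m \<le> k"
  shows "admits_estimator (\<lambda>xs. bernoulli_sample xs p) k \<Delta> (\<delta> + measure_pmf.prob (binomial_pmf k p) (- {K. m \<le> K}))"
proof (rule admits_transfer[OF assms(1), where Q="binomial_pmf k p" and G="{K. m \<le> K}" and T="\<lambda>xs K. hypergeometric_sample xs m"
      and K="\<lambda>S. if m \<le> size S then map_pmf Some (dropk m S) else return_pmf None"])
  fix xs :: "nat list" assume len: "length xs = k"
  have "bind_pmf (bernoulli_sample xs p) (\<lambda>S. if m \<le> size S then map_pmf Some (dropk m S) else return_pmf None)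
      = bind_pmf (binomial_pmf k p) (\<lambda>K. bind_pmf (hypergeometric_sample xs K) (\<lambda>S. if m \<le> size S then map_pmf Some (dropk m S) else return_pmf None))"
    by (simp add: bern_binom[OF assms(2,3)] len bind_assoc_pmf)
  also have "\<dots> = bind_pmf (binomial_pmf k p) (\<lambda>K. if K \<in> {K. m \<le> K} then map_pmf Some (hypergeometric_sample xs m) else return_pmf None)"
  proof (rule bind_pmf_cong[OF refl])
    fix K assume "K \<in> set_pmf (binomial_pmf k p)"
    hence Kk: "K \<le> length xs" using set_pmf_binomial_le assms(2,3) len by auto
    have "bind_pmf (hypergeometric_sample xs K) (\<lambda>S. if m \<le> size S then map_pmf Some (dropk m S) else return_pmf None)
        = bind_pmf (hypergeometric_sample xs K) (\<lambda>S. if m \<le> K then map_pmf Some (dropk m S) else return_pmf None)"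
      by (rule bind_pmf_cong[OF refl]) (simp add: hyp_size[OF Kk])
    also have "\<dots> = (if K \<in> {K. m \<le> K} then map_pmf Some (hypergeometric_sample xs m) else return_pmf None)"
      using Kk by (auto simp: map_bind_pmf[symmetric] hyp_drop)
    finally show "bind_pmf (hypergeometric_sample xs K) (\<lambda>S. if m \<le> size S then map_pmf Some (dropk m S) else return_pmf None)
        = (if K \<in> {K. m \<le> K} then map_pmf Some (hypergeometric_sample xs m) else return_pmf None)" .
  qed
  finally show "bind_pmf (bernoulli_sample xs p) (\<lambda>S. if m \<le> size S then map_pmf Some (dropk m S) else return_pmf None)
      = bind_pmf (binomial_pmf k p) (\<lambda>K. if K \<in> {K. m \<le> K} then map_pmf Some (hypergeometric_sample xs m) else return_pmf None)" .
  show "hypergeometric_sample xs m = bind_pmf (binomial_pmf k p) (\<lambda>K. hypergeometric_sample xs m)" by simp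
qed simp

lemma adm_b:
  assumes adm: "admits_estimator (\<lambda>xs. hypergeometric_sample xs m) k \<Delta> \<delta>" and mk: "m \<le> k" and kp: "k' > 0"
  shows "admits_estimator (\<lambda>xs. multinomial_sample xs m) k' (2 * \<Delta>)
           (\<delta> + real (k' choose \<Delta>) * (1 - real \<Delta> / real k') ^ k)"
proof -
  have d0: "0 \<le> \<delta>" using admits_nonneg[OF adm] .
  obtain est where est: "\<And>xs. length xs = k \<Longrightarrow>
      measure_pmf.prob (bind_pmf (hypergeometric_sample xs m) est) {c. real \<Delta> \<le> \<bar>c - real (num_colors xs)\<bar>} \<le> \<delta>"
    using adm unfolding admits_estimator_def by blast
  show ?thesis unfolding admits_estimator_def
  proof (intro exI[of _ est] allI impI)
    fix xs' :: "nat list" assume len: "length xs' = k'"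
    hence xne: "xs' \<noteq> []" using kp by auto
    let ?I = "pmf_of_set (ilists k' k)"
    let ?E = "{c. real (2 * \<Delta>) \<le> \<bar>c - real (num_colors xs')\<bar>}"
    let ?bad = "{u. real \<Delta> \<le> real (num_colors xs') - real (num_colors (map ((!) xs') u))}"
    let ?f = "\<lambda>u. measure_pmf.prob (bind_pmf (hypergeometric_sample (map ((!) xs') u) m) est) ?E"
    have sI: "set_pmf ?I = ilists k' k" using ilists_ne[OF kp] by simp
    have mu: "multinomial_sample xs' m = bind_pmf ?I (\<lambda>u. hypergeometric_sample (map ((!) xs') u) m)"
      using urn_composition[OF xne mk] len by simp
    have "bind_pmf (multinomial_sample xs' m) est = bind_pmf ?I (\<lambda>u. bind_pmf (hypergeometric_sample (map ((!) xs') u) m) est)"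
      unfolding mu by (rule bind_assoc_pmf)
    hence "measure_pmf.prob (bind_pmf (multinomial_sample xs' m) est) ?E = (\<integral>u. ?f u \<partial>measure_pmf ?I)"
      by (simp add: measure_bind_pmf_real[of ?I])
    also have "\<dots> \<le> (\<integral>u. \<delta> + indicator ?bad u \<partial>measure_pmf ?I)"
    proof (rule integral_mono_AE)
      show "integrable (measure_pmf ?I) ?f"
        by (rule measure_pmf.integrable_const_bound[where B=1]) auto
      show "integrable (measure_pmf ?I) (\<lambda>u. \<delta> + indicator ?bad u)"
        by (rule measure_pmf.integrable_const_bound[where B="\<delta> + 1"]) (use d0 in \<open>auto simp: indicator_def\<close>)
      show "AE u in measure_pmf ?I. ?f u \<le> \<delta> + indicator ?bad u"
      proof (rule AE_pmfI)
        fix u assume "u \<in> set_pmf ?I"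
        hence u: "set u \<subseteq> {..<k'}" "length u = k" using sI by (auto simp: ilists_def)
        let ?U = "map ((!) xs') u"
        show "?f u \<le> \<delta> + indicator ?bad u"
        proof (cases "u \<in> ?bad")
          case True
          have "?f u \<le> 1" by (rule measure_pmf.prob_le_1)
          moreover have "indicator ?bad u = (1::real)" using True by simp
          ultimately show ?thesis using d0 by linarith
        next
          case False
          have sub: "set ?U \<subseteq> set xs'" using u len by auto
          have cle: "num_colors ?U \<le> num_colors xs'" unfolding num_colors_def using sub by (simp add: card_mono)
          have lt: "real (num_colors xs') - real (num_colors ?U) < real \<Delta>" using False by simp
          have "?E \<subseteq> {c. real \<Delta> \<le> \<bar>c - real (num_colors ?U)\<bar>}"
          proof
            fix c assume "c \<in> ?E"
            hence "real (2 * \<Delta>) \<le> \<bar>c - real (num_colors xs')\<bar>" by simp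
            hence h: "2 * real \<Delta> \<le> \<bar>c - real (num_colors xs')\<bar>" by simp
            have t: "\<bar>(c - real (num_colors ?U)) + (real (num_colors ?U) - real (num_colors xs'))\<bar>
                 \<le> \<bar>c - real (num_colors ?U)\<bar> + \<bar>real (num_colors ?U) - real (num_colors xs')\<bar>"
              by (rule abs_triangle_ineq)
            have a: "\<bar>real (num_colors ?U) - real (num_colors xs')\<bar> = real (num_colors xs') - real (num_colors ?U)"
              using cle by simp
            have "real \<Delta> \<le> \<bar>c - real (num_colors ?U)\<bar>" using h t a lt by simp
            thus "c \<in> {c. real \<Delta> \<le> \<bar>c - real (num_colors ?U)\<bar>}" by simp
          qed
          hence "?f u \<le> measure_pmf.prob (bind_pmf (hypergeometric_sample ?U m) est) {c. real \<Delta> \<le> \<bar>c - real (num_colors ?U)\<bar>}"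
            by (rule measure_pmf.finite_measure_mono) simp
          also have "\<dots> \<le> \<delta>" by (rule est) (simp add: u)
          finally show ?thesis using False by simp
        qed
      qed
    qed
    also have "\<dots> = \<delta> + measure_pmf.prob ?I ?bad"
      by (subst Bochner_Integration.integral_add) (auto intro!: measure_pmf.integrable_const_bound[where B=1])
    also have "measure_pmf.prob ?I ?bad \<le> real (k' choose \<Delta>) * (1 - real \<Delta> / real k') ^ k"
      using coupon[OF xne, of k \<Delta>] len by simp
    finally show "measure_pmf.prob (bind_pmf (multinomial_sample xs' m) est) ?E
        \<le> \<delta> + real (k' choose \<Delta>) * (1 - real \<Delta> / real k') ^ k" by simp
  qed
qed

lemma admits_mono: "admits_estimator s k \<Delta> \<delta> \<Longrightarrow> \<delta> \<le> \<delta>' \<Longrightarrow> admits_estimator s k \<Delta> \<delta>'"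
  unfolding admits_estimator_def by (meson order_trans)

lemma INF_nat_le:
  assumes "(INF m\<in>S. ereal (real m)) \<le> ereal n"
  shows "\<exists>m\<in>S. real m \<le> n"
proof (cases "S = {}")
  case True thus ?thesis using assms by (simp add: top_ereal_def)
next
  case False
  define m0 where "m0 = (LEAST m. m \<in> S)"
  have m0S: "m0 \<in> S" using False unfolding m0_def by (metis LeastI ex_in_conv)
  have "ereal (real m0) \<le> (INF m\<in>S. ereal (real m))"
    by (rule INF_greatest) (simp add: m0_def Least_le)
  hence "ereal (real m0) \<le> ereal n" using assms by (rule order_trans)
  thus ?thesis using m0S by auto
qed

lemma INF_real_lt:
  assumes "(INF x\<in>S. ereal (f x)) \<le> ereal n" "\<eta> > 0"
  shows "\<exists>x\<in>S. f x < n + \<eta>"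
proof -
  have "(INF x\<in>S. ereal (f x)) < ereal (n + \<eta>)" using assms by (simp add: order.strict_trans1)
  then obtain x where "x \<in> S" "ereal (f x) < ereal (n + \<eta>)" by (auto simp: INF_less_iff)
  thus ?thesis by auto
qed

lemma INF_nonneg_le:
  assumes "(INF x\<in>S. ereal (f x)) \<le> ereal n" "\<And>x. x \<in> S \<Longrightarrow> 0 \<le> f x"
  shows "0 \<le> n" "S \<noteq> {}"
proof -
  show "S \<noteq> {}" using assms(1) by (auto simp: top_ereal_def)
  have "ereal 0 \<le> (INF x\<in>S. ereal (f x))" by (rule INF_greatest) (use assms(2) in simp)
  thus "0 \<le> n" using assms(1) by (metis ereal_less_eq(3) order_trans)
qed

lemma upper_calc:
  assumes n: "0 \<le> n" and l: "l < n + (real (nat \<lfloor>2 * n\<rfloor> + 1) - 2 * n) * ln 2"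
  shows "exp l / 2 ^ (nat \<lfloor>2 * n\<rfloor> + 1) \<le> (exp 1 / 4) powr n"
proof -
  let ?M = "real (nat \<lfloor>2 * n\<rfloor> + 1)"
  have M: "?M = real_of_int \<lfloor>2 * n\<rfloor> + 1" using n by simp
  have "exp l \<le> exp (n + (?M - 2 * n) * ln 2)" using l by simp
  also have "\<dots> = exp n * 2 powr (?M - 2 * n)" by (simp add: exp_add powr_def mult.commute)
  also have "2 powr (?M - 2 * n) = 2 powr ?M / 2 powr (2 * n)" by (simp add: powr_diff)
  also have "2 powr ?M = 2 ^ (nat \<lfloor>2 * n\<rfloor> + 1)" by (subst powr_realpow[symmetric]) auto
  finally have "exp l / 2 ^ (nat \<lfloor>2 * n\<rfloor> + 1) \<le> exp n / 2 powr (2 * n)"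
    by (simp add: field_simps)
  also have "2 powr (2 * n) = 4 powr n" by (simp add: powr_powr[symmetric])
  also have "exp n / 4 powr n = (exp 1 / 4) powr n"
  proof -
    have "(exp 1 / 4) powr n = exp 1 powr n / 4 powr n" by (rule powr_divide)
    moreover have "exp 1 powr n = exp n" by (simp add: powr_def)
    ultimately show ?thesis by simp
  qed
  finally show ?thesis .
qed

lemma part_a: "nstar_H k \<Delta> \<delta> \<le> nstar_M k \<Delta> \<delta>"
  unfolding nstar_H_def nstar_M_def
proof (rule INF_mono)
  fix m assume "m \<in> {m. admits_estimator (\<lambda>xs. multinomial_sample xs m) k \<Delta> \<delta>}"
  hence adm: "admits_estimator (\<lambda>xs. multinomial_sample xs m) k \<Delta> \<delta>" by simp
  show "\<exists>n\<in>{m. m \<le> k \<and> admits_estimator (\<lambda>xs. hypergeometric_sample xs m) k \<Delta> \<delta>}. ereal (real n) \<le> ereal (real m)"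
  proof (cases "k = 0")
    case True
    have "admits_estimator (\<lambda>xs. hypergeometric_sample xs 0) k \<Delta> \<delta>"
      using admits_k0[of "\<lambda>xs. multinomial_sample xs m" \<Delta> \<delta> "\<lambda>xs. hypergeometric_sample xs 0"] adm True
      by (simp add: samplers_empty)
    thus ?thesis using True by (intro bexI[of _ 0]) auto
  next
    case False
    show ?thesis
    proof (cases "m \<le> k")
      case True
      thus ?thesis using adm_a[OF adm True] False by (intro bexI[of _ m]) auto
    next
      case mk: False
      have "admits_estimator (\<lambda>xs. hypergeometric_sample xs k) k \<Delta> \<delta>"
        by (rule admits_full) (use hyp_full admits_nonneg[OF adm] in \<open>auto dest: admits_Delta0[of _ k \<delta>]\<close>,
            use adm admits_Delta0 in blast)
      thus ?thesis using mk by (intro bexI[of _ k]) auto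
    qed
  qed
qed

lemma part_b:
  assumes "nstar_H k \<Delta> \<delta> \<le> ereal n"
  shows "nstar_M k' (2 * \<Delta>) (\<delta> + real (k' choose \<Delta>) * (1 - real \<Delta> / real k') ^ k) \<le> ereal n"
proof -
  obtain m where m: "m \<le> k" "admits_estimator (\<lambda>xs. hypergeometric_sample xs m) k \<Delta> \<delta>" "real m \<le> n"
    using INF_nat_le[OF assms[unfolded nstar_H_def]] by auto
  have d0: "0 \<le> \<delta>" using admits_nonneg[OF m(2)] .
  have adm: "admits_estimator (\<lambda>xs. multinomial_sample xs m) k' (2 * \<Delta>) (\<delta> + real (k' choose \<Delta>) * (1 - real \<Delta> / real k') ^ k)"
  proof (cases "k' = 0")
    case False thus ?thesis using adm_b[OF m(2) m(1)] by simp
  next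
    case True
    show ?thesis
    proof (rule admits_full)
      show "multinomial_sample xs m = return_pmf (mset xs)" if "length xs = k'" for xs
        using that True by (simp add: samplers_empty)
      show "0 \<le> \<delta> + real (k' choose \<Delta>) * (1 - real \<Delta> / real k') ^ k" using True d0 by (cases \<Delta>) auto
      show "2 * \<Delta> = 0 \<Longrightarrow> 1 \<le> \<delta> + real (k' choose \<Delta>) * (1 - real \<Delta> / real k') ^ k" using True d0 by auto
    qed
  qed
  have "nstar_M k' (2 * \<Delta>) (\<delta> + real (k' choose \<Delta>) * (1 - real \<Delta> / real k') ^ k) \<le> ereal (real m)"
    unfolding nstar_M_def by (rule INF_lower) (use adm in simp)
  also have "\<dots> \<le> ereal n" using m(3) by simp
  finally show ?thesis .
qed

lemma part_c:
  assumes "nstar_P k \<Delta> \<delta> \<le> ereal n"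
  shows "nstar_M k \<Delta> (\<delta> + (exp 1 / 4) powr n) \<le> ereal (2 * n)"
proof -
  let ?S = "{l::real. 0 \<le> l \<and> admits_estimator (\<lambda>xs. poisson_sample xs l) k \<Delta> \<delta>}"
  have A: "(INF l\<in>?S. ereal l) \<le> ereal n" using assms by (simp add: nstar_P_def)
  have n0: "0 \<le> n" using INF_nonneg_le(1)[where S="?S" and f="\<lambda>l. l", OF A] by auto
  define m where "m = nat \<lfloor>2 * n\<rfloor>"
  have mle: "real m \<le> 2 * n" using n0 by (simp add: m_def)
  have gt: "2 * n < real (m + 1)" using n0 by (simp add: m_def) linarith
  define \<eta> where "\<eta> = (real (m + 1) - 2 * n) * ln 2"
  have \<eta>: "\<eta> > 0" using gt by (simp add: \<eta>_def)
  obtain l where l: "l \<in> ?S" "l < n + \<eta>" using INF_real_lt[where S="?S" and f="\<lambda>l. l", OF A \<eta>] by auto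
  have adm: "admits_estimator (\<lambda>xs. multinomial_sample xs m) k \<Delta> (\<delta> + (exp 1 / 4) powr n)"
  proof (cases "k = 0")
    case True
    have "admits_estimator (\<lambda>xs. multinomial_sample xs m) k \<Delta> \<delta>"
      using admits_k0[of "\<lambda>xs. poisson_sample xs l" \<Delta> \<delta> "\<lambda>xs. multinomial_sample xs m"] l True
      by (simp add: samplers_empty)
    thus ?thesis by (rule admits_mono) simp
  next
    case False
    have a1: "admits_estimator (\<lambda>xs. multinomial_sample xs m) k \<Delta> (\<delta> + measure_pmf.prob (poi l) (- {N. N \<le> m}))"
      using adm_c[of l k \<Delta> \<delta> m] l False by simp
    have a2: "measure_pmf.prob (poi l) (- {N. N \<le> m}) \<le> (exp 1 / 4) powr n"
    proof -
      have "- {N. N \<le> m} = {N. m + 1 \<le> N}" by auto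
      hence "measure_pmf.prob (poi l) (- {N. N \<le> m}) \<le> exp l / 2 ^ (m + 1)"
        using poi_upper[of l "m + 1"] l by simp
      also have "\<dots> \<le> (exp 1 / 4) powr n"
        using upper_calc[OF n0, of l] l(2) by (simp add: m_def \<eta>_def)
      finally show ?thesis .
    qed
    show ?thesis by (rule admits_mono[OF a1]) (use a2 in simp)
  qed
  have "nstar_M k \<Delta> (\<delta> + (exp 1 / 4) powr n) \<le> ereal (real m)"
    unfolding nstar_M_def by (rule INF_lower) (use adm in simp)
  also have "\<dots> \<le> ereal (2 * n)" using mle by simp
  finally show ?thesis .
qed

lemma part_d:
  assumes "nstar_M k \<Delta> \<delta> \<le> ereal n"
  shows "nstar_P k \<Delta> (\<delta> + (2 / exp 1) powr n) \<le> ereal (2 * n)"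
proof -
  obtain m where m: "admits_estimator (\<lambda>xs. multinomial_sample xs m) k \<Delta> \<delta>" "real m \<le> n"
    using INF_nat_le[OF assms[unfolded nstar_M_def]] by auto
  have n0: "0 \<le> n" using m(2) by linarith
  have adm: "admits_estimator (\<lambda>xs. poisson_sample xs (2 * n)) k \<Delta> (\<delta> + (2 / exp 1) powr n)"
  proof (cases "k = 0")
    case True
    have "admits_estimator (\<lambda>xs. poisson_sample xs (2 * n)) k \<Delta> \<delta>"
      using admits_k0[of "\<lambda>xs. multinomial_sample xs m" \<Delta> \<delta> "\<lambda>xs. poisson_sample xs (2 * n)"] m True
      by (simp add: samplers_empty)
    thus ?thesis by (rule admits_mono) simp
  next
    case False
    have a1: "admits_estimator (\<lambda>xs. poisson_sample xs (2 * n)) k \<Delta> (\<delta> + measure_pmf.prob (poi (2 * n)) (- {N. m \<le> N}))"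
      using adm_d[OF m(1)] False by simp
    have a2: "measure_pmf.prob (poi (2 * n)) (- {N. m \<le> N}) \<le> (2 / exp 1) powr n"
    proof -
      have "- {N. m \<le> N} = {N. N < m}" by auto
      hence "measure_pmf.prob (poi (2 * n)) (- {N. m \<le> N}) \<le> 2 ^ m * exp (- (2 * n) / 2)"
        using poi_lower[of "2 * n" m] n0 by simp
      also have "\<dots> \<le> 2 powr n * exp (- n)"
      proof -
        have "(2::real) ^ m = 2 powr (real m)" by (simp add: powr_realpow)
        also have "\<dots> \<le> 2 powr n" using m(2) by simp
        finally show ?thesis by simp
      qed
      also have "2 powr n * exp (- n) = (2 / exp 1) powr n"
      proof -
        have "(2 / exp 1) powr n = 2 powr n / exp 1 powr n" by (rule powr_divide)
        moreover have "exp 1 powr n = exp n" by (simp add: powr_def)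
        ultimately show ?thesis by (simp add: exp_minus field_simps)
      qed
      finally show ?thesis .
    qed
    show ?thesis by (rule admits_mono[OF a1]) (use a2 in simp)
  qed
  have "nstar_P k \<Delta> (\<delta> + (2 / exp 1) powr n) \<le> ereal (2 * n)"
    unfolding nstar_P_def by (rule INF_lower) (use adm n0 in simp)
  thus ?thesis .
qed

lemma lower_calc:
  assumes "real m \<le> n"
  shows "2 ^ m * exp (- n) \<le> (2 / exp 1) powr n"
proof -
  have "(2::real) ^ m = 2 powr (real m)" by (simp add: powr_realpow)
  also have "\<dots> \<le> 2 powr n" using assms by simp
  finally have "2 ^ m * exp (- n) \<le> 2 powr n * exp (- n)" by simp
  also have "2 powr n * exp (- n) = (2 / exp 1) powr n"
  proof -
    have "(2 / exp 1) powr n = 2 powr n / exp 1 powr n" by (rule powr_divide)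
    moreover have "exp 1 powr n = exp n" by (simp add: powr_def)
    ultimately show ?thesis by (simp add: exp_minus field_simps)
  qed
  finally show ?thesis .
qed

lemma prob_outside_support: "A \<inter> set_pmf M = {} \<Longrightarrow> measure_pmf.prob M A = 0"
  by (metis measure_Int_set_pmf measure_empty)

lemma part_e:
  assumes "nstar_B k \<Delta> \<delta> \<le> ereal n"
  shows "nstar_H k \<Delta> (\<delta> + (exp 1 / 4) powr n) \<le> ereal (2 * n)"
proof -
  let ?S = "{p::real. 0 \<le> p \<and> p \<le> 1 \<and> admits_estimator (\<lambda>xs. bernoulli_sample xs p) k \<Delta> \<delta>}"
  have A: "(INF p\<in>?S. ereal (real k * p)) \<le> ereal n" using assms by (simp add: nstar_B_def)
  have n0: "0 \<le> n" using INF_nonneg_le(1)[where S="?S" and f="\<lambda>p. real k * p", OF A] by auto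
  define m0 where "m0 = nat \<lfloor>2 * n\<rfloor>"
  have mle: "real m0 \<le> 2 * n" using n0 by (simp add: m0_def)
  have gt: "2 * n < real (m0 + 1)" using n0 by (simp add: m0_def) linarith
  define \<eta> where "\<eta> = (real (m0 + 1) - 2 * n) * ln 2"
  have \<eta>: "\<eta> > 0" using gt by (simp add: \<eta>_def)
  obtain p where p: "p \<in> ?S" "real k * p < n + \<eta>"
    using INF_real_lt[where S="?S" and f="\<lambda>p. real k * p", OF A \<eta>] by auto
  define m where "m = min k m0"
  have mk: "m \<le> k" by (simp add: m_def)
  have adm: "admits_estimator (\<lambda>xs. hypergeometric_sample xs m) k \<Delta> (\<delta> + (exp 1 / 4) powr n)"
  proof (cases "k = 0")
    case True
    have "admits_estimator (\<lambda>xs. hypergeometric_sample xs m) k \<Delta> \<delta>"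
      using admits_k0[of "\<lambda>xs. bernoulli_sample xs p" \<Delta> \<delta> "\<lambda>xs. hypergeometric_sample xs m"] p True
      by (simp add: samplers_empty m_def)
    thus ?thesis by (rule admits_mono) simp
  next
    case False
    have a1: "admits_estimator (\<lambda>xs. hypergeometric_sample xs m) k \<Delta> (\<delta> + measure_pmf.prob (binomial_pmf k p) (- {K. K \<le> m}))"
      using adm_e[of p k \<Delta> \<delta> m] p mk by simp
    have a2: "measure_pmf.prob (binomial_pmf k p) (- {K. K \<le> m}) \<le> (exp 1 / 4) powr n"
    proof (cases "m0 \<le> k")
      case True
      hence mm: "m = m0" by (simp add: m_def)
      have "- {K. K \<le> m} = {K. m0 + 1 \<le> K}" using mm by auto
      hence "measure_pmf.prob (binomial_pmf k p) (- {K. K \<le> m}) \<le> exp (real k * p) / 2 ^ (m0 + 1)"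
        using binom_upper[of p k "m0 + 1"] p by simp
      also have "\<dots> \<le> (exp 1 / 4) powr n"
        using upper_calc[OF n0, of "real k * p"] p(2) by (simp add: m0_def \<eta>_def)
      finally show ?thesis .
    next
      case False
      hence mm: "m = k" by (simp add: m_def)
      have "- {K. K \<le> m} \<inter> set_pmf (binomial_pmf k p) = {}"
        using set_pmf_binomial_le[of p _ k] p mm by auto
      hence "measure_pmf.prob (binomial_pmf k p) (- {K. K \<le> m}) = 0" by (rule prob_outside_support)
      thus ?thesis by simp
    qed
    show ?thesis by (rule admits_mono[OF a1]) (use a2 in simp)
  qed
  have "nstar_H k \<Delta> (\<delta> + (exp 1 / 4) powr n) \<le> ereal (real m)"
    unfolding nstar_H_def by (rule INF_lower) (use adm mk in simp)
  also have "\<dots> \<le> ereal (2 * n)" using mle by (simp add: m_def)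
  finally show ?thesis .
qed

lemma part_f:
  assumes "nstar_H k \<Delta> \<delta> \<le> ereal n"
  shows "nstar_B k \<Delta> (\<delta> + (2 / exp 1) powr n) \<le> ereal (2 * n)"
proof -
  obtain m where m: "m \<le> k" "admits_estimator (\<lambda>xs. hypergeometric_sample xs m) k \<Delta> \<delta>" "real m \<le> n"
    using INF_nat_le[OF assms[unfolded nstar_H_def]] by auto
  have n0: "0 \<le> n" using m(3) by linarith
  define p where "p = (if k = 0 then 0 else min 1 (2 * n / real k))"
  have p01: "0 \<le> p" "p \<le> 1" using n0 by (auto simp: p_def)
  have kp: "real k * p \<le> 2 * n" using n0 by (auto simp: p_def min_def field_simps)
  have adm: "admits_estimator (\<lambda>xs. bernoulli_sample xs p) k \<Delta> (\<delta> + (2 / exp 1) powr n)"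
  proof (cases "k = 0")
    case True
    have "admits_estimator (\<lambda>xs. bernoulli_sample xs p) k \<Delta> \<delta>"
      using admits_k0[of "\<lambda>xs. hypergeometric_sample xs m" \<Delta> \<delta> "\<lambda>xs. bernoulli_sample xs p"] m True
      by (simp add: samplers_empty)
    thus ?thesis by (rule admits_mono) simp
  next
    case False
    have a1: "admits_estimator (\<lambda>xs. bernoulli_sample xs p) k \<Delta> (\<delta> + measure_pmf.prob (binomial_pmf k p) (- {K. m \<le> K}))"
      using adm_f[OF m(2) p01 m(1)] .
    have a2: "measure_pmf.prob (binomial_pmf k p) (- {K. m \<le> K}) \<le> (2 / exp 1) powr n"
    proof (cases "real k \<le> 2 * n")
      case True
      hence "p = 1" using False by (simp add: p_def)
      hence "- {K. m \<le> K} \<inter> set_pmf (binomial_pmf k p) = {}" using m(1) by auto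
      hence "measure_pmf.prob (binomial_pmf k p) (- {K. m \<le> K}) = 0" by (rule prob_outside_support)
      thus ?thesis by simp
    next
      case nk: False
      hence "p = 2 * n / real k" using False by (simp add: p_def)
      hence kp2: "real k * p = 2 * n" using False by simp
      have "- {K. m \<le> K} = {K. K < m}" by auto
      hence "measure_pmf.prob (binomial_pmf k p) (- {K. m \<le> K}) \<le> 2 ^ m * exp (- (real k * p) / 2)"
        using binom_lower[OF p01, of k m] by simp
      also have "\<dots> = 2 ^ m * exp (- n)" using kp2 by simp
      also have "\<dots> \<le> (2 / exp 1) powr n" by (rule lower_calc[OF m(3)])
      finally show ?thesis .
    qed
    show ?thesis by (rule admits_mono[OF a1]) (use a2 in simp)
  qed
  have "nstar_B k \<Delta> (\<delta> + (2 / exp 1) powr n) \<le> ereal (real k * p)"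
    unfolding nstar_B_def by (rule INF_lower) (use adm p01 in simp)
  also have "\<dots> \<le> ereal (2 * n)" using kp by simp
  finally show ?thesis .
qed

theorem corollary1:
  fixes k \<Delta> :: nat and \<delta> n :: real
  shows "nstar_H k \<Delta> \<delta> \<le> nstar_M k \<Delta> \<delta>
    \<and> (nstar_H k \<Delta> \<delta> \<le> ereal n \<longrightarrow>
         (\<forall>k'::nat. nstar_M k' (2 * \<Delta>)
            (\<delta> + real (k' choose \<Delta>) * (1 - real \<Delta> / real k') ^ k) \<le> ereal n))
    \<and> (nstar_P k \<Delta> \<delta> \<le> ereal n \<longrightarrow> nstar_M k \<Delta> (\<delta> + (exp 1 / 4) powr n) \<le> ereal (2 * n))
    \<and> (nstar_M k \<Delta> \<delta> \<le> ereal n \<longrightarrow> nstar_P k \<Delta> (\<delta> + (2 / exp 1) powr n) \<le> ereal (2 * n))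
    \<and> (nstar_B k \<Delta> \<delta> \<le> ereal n \<longrightarrow> nstar_H k \<Delta> (\<delta> + (exp 1 / 4) powr n) \<le> ereal (2 * n))
    \<and> (nstar_H k \<Delta> \<delta> \<le> ereal n \<longrightarrow> nstar_B k \<Delta> (\<delta> + (2 / exp 1) powr n) \<le> ereal (2 * n))"
  by (intro conjI impI allI part_a part_b part_c part_d part_e part_f)

end
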